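(* Let $P,Q$ be terms of $\mathcal{L}$ whose free process variables are among $X_1,\dots,X_n$, and let $h$ be a name not occurring in $P,Q$. Then $P\{\tilde R/\tilde X\}\sim_{\mathrm{HO}}Q\{\tilde R/\tilde X\}$ for every tuple $\tilde R=R_1,\dots,R_n$ of closed terms if and only if $h(X_1).\cdots.h(X_n).P\sim_{\mathrm{HO}}h(X_1).\cdots.h(X_n).Q$.
   Context: Calculus $\mathcal{L}$: names are constants ($a,b,c,d$) or name variables ($x,y,z$), $m,n$ range over names; process variables $X,Y,Z$. Terms: $P,Q::=0\mid X\mid m(X).P\mid \overline{m}(Q)\mid P|Q\mid \langle X\rangle P\mid P\langle Q\rangle\mid\langle x\rangle P\mid P\langle n\rangle$; $m(X).P$, $\langle X\rangle P$ bind $X$, $\langle x\rangle P$ binds $x$; up to $\alpha$-conversion, well-typed, applications terminating. Closed = no free process variables. $\{\tilde R/\tilde X\}$ is pairwise substitution. Structural congruence $\equiv$: smallest congruence with associativity and commutativity of $|$, $P|0\equiv P$, $(\langle X\rangle P)\langle Q\rangle\equiv P\{Q/X\}$, $(\langle x\rangle P)\langle m\rangle\equiv P\{m/x\}$. Transitions: $m(X).P\xrightarrow{m(X)}P$; $\overline{m}Q\xrightarrow{\overline{m}Q}0$; $P\xrightarrow{\lambda}P'$ implies $P|Q\xrightarrow{\lambda}P'|Q$; $P\xrightarrow{\overline{m}A}P'$, $Q\xrightarrow{m(X)}Q'$ imply $P|Q\xrightarrow{\tau}P'|Q'\{A/X\}$; symmetric versions; closure under $\equiv$. Strong HO bisimulation: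 symmetric relation $\mathcal{R}$ on closed terms such that $P\,\mathcal{R}\,Q$ implies: (1) if $P$ is a non-abstraction (not of form $\langle Y\rangle A$ or $\langle y\rangle A$) so is $Q$; (2) if $P=\langle Y\rangle P'$ then $Q=\langle Y\rangle Q'$ and $P'\{A/Y\}\,\mathcal{R}\,Q'\{A/Y\}$ for every closed $A$; (3) if $P=\langle y\rangle A$ then $Q=\langle y\rangle B$ and $A\,\mathcal{R}\,B$; (4) if $P\xrightarrow{\overline{a}A}P'$ then $Q\xrightarrow{\overline{a}B}Q'$ with $A\,\mathcal{R}\,B$ and $P'\,\mathcal{R}\,Q'$; (5) if $P\xrightarrow{a(X)}P'$ then $Q\xrightarrow{a(X)}Q'$ and $P'\{A/X\}\,\mathcal{R}\,Q'\{A/X\}$ for every closed $A$; (6) if $P\xrightarrow{\tau}P'$ then $Q\xrightarrow{\tau}Q'$ with $P'\,\mathcal{R}\,Q'$. $\sim_{\mathrm{HO}}$ is the largest strong HO bisimulation. *)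

theory Defs
  imports Main
begin

section \<open>Syntax of the calculus L (de Bruijn representation, i.e. terms up to alpha)\<close>

text \<open>Names: constants a,b,c,... (NC k) and name variables (NV i, de Bruijn index,
  bound by name abstractions).  Process variables are de Bruijn indices (PVar i),
  bound by input prefixes and process abstractions.\<close>

datatype nm = NC nat | NV nat

text \<open>Simple types: processes, process abstractions, name abstractions.\<close>
datatype ty = Pr | FunP ty ty | FunN ty

datatype trm =
    PNil
  | PVar nat
  | Inp nm ty trm        (* m(X:T).P, binds process variable 0 *)
  | Out nm trm
  | Par trm trm
  | AbsP ty trm          (* <X:T>P, binds process variable 0 *)
  | AppP trm trm
  | AbsN trm             (* <x>P, binds name variable 0 *)
  | AppN trm nm

fun nmshift :: "nm \<Rightarrow> nm" where
  "nmshift (NC c) = NC c"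
| "nmshift (NV i) = NV (Suc i)"

fun nmap :: "(nat \<Rightarrow> nm) \<Rightarrow> nm \<Rightarrow> nm" where
  "nmap s (NC c) = NC c"
| "nmap s (NV i) = s i"

definition upn :: "(nat \<Rightarrow> nm) \<Rightarrow> nat \<Rightarrow> nm" where
  "upn s = (\<lambda>i. case i of 0 \<Rightarrow> NV 0 | Suc j \<Rightarrow> nmshift (s j))"

primrec nsubst :: "(nat \<Rightarrow> nm) \<Rightarrow> trm \<Rightarrow> trm" where
  "nsubst s PNil = PNil"
| "nsubst s (PVar i) = PVar i"
| "nsubst s (Inp m T P) = Inp (nmap s m) T (nsubst s P)"
| "nsubst s (Out m Q) = Out (nmap s m) (nsubst s Q)"
| "nsubst s (Par P Q) = Par (nsubst s P) (nsubst s Q)"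
| "nsubst s (AbsP T P) = AbsP T (nsubst s P)"
| "nsubst s (AppP P Q) = AppP (nsubst s P) (nsubst s Q)"
| "nsubst s (AbsN P) = AbsN (nsubst (upn s) P)"
| "nsubst s (AppN P m) = AppN (nsubst s P) (nmap s m)"

definition upr :: "(nat \<Rightarrow> nat) \<Rightarrow> nat \<Rightarrow> nat" where
  "upr f = (\<lambda>i. case i of 0 \<Rightarrow> 0 | Suc j \<Rightarrow> Suc (f j))"

primrec renP :: "(nat \<Rightarrow> nat) \<Rightarrow> trm \<Rightarrow> trm" where
  "renP f PNil = PNil"
| "renP f (PVar i) = PVar (f i)"
| "renP f (Inp m T P) = Inp m T (renP (upr f) P)"
| "renP f (Out m Q) = Out m (renP f Q)"
| "renP f (Par P Q) = Par (renP f P) (renP f Q)"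
| "renP f (AbsP T P) = AbsP T (renP (upr f) P)"
| "renP f (AppP P Q) = AppP (renP f P) (renP f Q)"
| "renP f (AbsN P) = AbsN (renP f P)"
| "renP f (AppN P m) = AppN (renP f P) m"

definition upp :: "(nat \<Rightarrow> trm) \<Rightarrow> nat \<Rightarrow> trm" where
  "upp s = (\<lambda>i. case i of 0 \<Rightarrow> PVar 0 | Suc j \<Rightarrow> renP Suc (s j))"

primrec psubst :: "(nat \<Rightarrow> trm) \<Rightarrow> trm \<Rightarrow> trm" where
  "psubst s PNil = PNil"
| "psubst s (PVar i) = s i"
| "psubst s (Inp m T P) = Inp m T (psubst (upp s) P)"
| "psubst s (Out m Q) = Out m (psubst s Q)"
| "psubst s (Par P Q) = Par (psubst s P) (psubst s Q)"
| "psubst s (AbsP T P) = AbsP T (psubst (upp s) P)"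
| "psubst s (AppP P Q) = AppP (psubst s P) (psubst s Q)"
| "psubst s (AbsN P) = AbsN (psubst (\<lambda>i. nsubst (\<lambda>j. NV (Suc j)) (s i)) P)"
| "psubst s (AppN P m) = AppN (psubst s P) m"

text \<open>P{A/X} where X is the process variable bound by the outermost binder (index 0).\<close>
definition inst :: "trm \<Rightarrow> nat \<Rightarrow> trm" where
  "inst A = (\<lambda>i. case i of 0 \<Rightarrow> A | Suc j \<Rightarrow> PVar j)"

text \<open>P{m/x} where x is the name variable bound by the outermost binder (index 0).\<close>
definition ninst :: "nm \<Rightarrow> nat \<Rightarrow> nm" where
  "ninst m = (\<lambda>i. case i of 0 \<Rightarrow> m | Suc j \<Rightarrow> NV j)"

text \<open>Pairwise substitution P{R_1..R_n / X_1..X_n}: the list entry Rs!i replaces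
  the process variable with de Bruijn index i.\<close>
definition ssubst :: "trm list \<Rightarrow> trm \<Rightarrow> trm" where
  "ssubst Rs P = psubst (\<lambda>i. if i < length Rs then Rs ! i else PVar (i - length Rs)) P"

primrec names :: "trm \<Rightarrow> nm set" where
  "names PNil = {}"
| "names (PVar i) = {}"
| "names (Inp m T P) = insert m (names P)"
| "names (Out m Q) = insert m (names Q)"
| "names (Par P Q) = names P \<union> names Q"
| "names (AbsP T P) = names P"
| "names (AppP P Q) = names P \<union> names Q"
| "names (AbsN P) = names P"
| "names (AppN P m) = insert m (names P)"

section \<open>Typing (well-typedness; guarantees applications terminate)\<close>

text \<open>typing G P T: P has type T when free process variable i has type G!i.
  In particular typing [] P T implies that P is closed.\<close>
inductive typing :: "ty list \<Rightarrow> trm \<Rightarrow> ty \<Rightarrow> bool" where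
  t_nil: "typing G PNil Pr"
| t_var: "i < length G \<Longrightarrow> typing G (PVar i) (G ! i)"
| t_inp: "typing (T # G) P Pr \<Longrightarrow> typing G (Inp m T P) Pr"
| t_out: "typing G Q T \<Longrightarrow> typing G (Out m Q) Pr"
| t_par: "typing G P Pr \<Longrightarrow> typing G Q Pr \<Longrightarrow> typing G (Par P Q) Pr"
| t_absP: "typing (T # G) P U \<Longrightarrow> typing G (AbsP T P) (FunP T U)"
| t_appP: "typing G P (FunP T U) \<Longrightarrow> typing G Q T \<Longrightarrow> typing G (AppP P Q) U"
| t_absN: "typing G P U \<Longrightarrow> typing G (AbsN P) (FunN U)"
| t_appN: "typing G P (FunN U) \<Longrightarrow> typing G (AppN P m) U"

definition closedT :: "trm \<Rightarrow> bool" where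
  "closedT P \<longleftrightarrow> (\<exists>T. typing [] P T)"

inductive scong :: "trm \<Rightarrow> trm \<Rightarrow> bool" where
  sc_refl: "scong P P"
| sc_sym: "scong P Q \<Longrightarrow> scong Q P"
| sc_trans: "scong P Q \<Longrightarrow> scong Q R \<Longrightarrow> scong P R"
| sc_inp: "scong P P' \<Longrightarrow> scong (Inp m T P) (Inp m T P')"
| sc_out: "scong P P' \<Longrightarrow> scong (Out m P) (Out m P')"
| sc_par: "scong P P' \<Longrightarrow> scong Q Q' \<Longrightarrow> scong (Par P Q) (Par P' Q')"
| sc_absP: "scong P P' \<Longrightarrow> scong (AbsP T P) (AbsP T P')"
| sc_appP: "scong P P' \<Longrightarrow> scong Q Q' \<Longrightarrow> scong (AppP P Q) (AppP P' Q')"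
| sc_absN: "scong P P' \<Longrightarrow> scong (AbsN P) (AbsN P')"
| sc_appN: "scong P P' \<Longrightarrow> scong (AppN P m) (AppN P' m)"
| sc_assoc: "scong (Par (Par P Q) R) (Par P (Par Q R))"
| sc_comm: "scong (Par P Q) (Par Q P)"
| sc_nil: "scong (Par P PNil) P"
| sc_betaP: "scong (AppP (AbsP T P) Q) (psubst (inst Q) P)"
| sc_betaN: "scong (AppN (AbsN P) m) (nsubst (ninst m) P)"

text \<open>LInp m T is the input label m(X) (X of type T); the residual has the received
  variable X free as process variable 0.  LOut m A is \<overline>m A.\<close>
datatype lab = LOut nm trm | LInp nm ty | LTau

fun labctx :: "lab \<Rightarrow> ty list" where
  "labctx (LInp m T) = [T]"
| "labctx _ = []"

text \<open>The inactive partner of a parallel composition, adjusted to the residual's scope.\<close>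
fun lift_lab :: "lab \<Rightarrow> trm \<Rightarrow> trm" where
  "lift_lab (LInp m T) Q = renP Suc Q"
| "lift_lab _ Q = Q"

inductive trans :: "trm \<Rightarrow> lab \<Rightarrow> trm \<Rightarrow> bool" where
  tr_inp: "trans (Inp m T P) (LInp m T) P"
| tr_out: "trans (Out m Q) (LOut m Q) PNil"
| tr_parL: "trans P l P' \<Longrightarrow> trans (Par P Q) l (Par P' (lift_lab l Q))"
| tr_parR: "trans P l P' \<Longrightarrow> trans (Par Q P) l (Par (lift_lab l Q) P')"
| tr_commL: "trans P (LOut m A) P' \<Longrightarrow> trans Q (LInp m T) Q' \<Longrightarrow> typing [] A T \<Longrightarrow>
             trans (Par P Q) LTau (Par P' (psubst (inst A) Q'))"
| tr_commR: "trans P (LOut m A) P' \<Longrightarrow> trans Q (LInp m T) Q' \<Longrightarrow> typing [] A T \<Longrightarrow>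
             trans (Par Q P) LTau (Par (psubst (inst A) Q') P')"
| tr_cong: "scong P P1 \<Longrightarrow> typing [] P1 Pr \<Longrightarrow> trans P1 l P1' \<Longrightarrow> scong P1' P' \<Longrightarrow>
            typing (labctx l) P' Pr \<Longrightarrow> trans P l P'"

definition is_abs :: "trm \<Rightarrow> bool" where
  "is_abs P \<longleftrightarrow> (\<exists>T U P'. scong P (AbsP T P') \<and> typing [T] P' U)
               \<or> (\<exists>U A. scong P (AbsN A) \<and> typing [] A U)"

definition ho_bisim :: "(trm \<Rightarrow> trm \<Rightarrow> bool) \<Rightarrow> bool" where
  "ho_bisim R \<longleftrightarrow> (\<forall>P Q. R P Q \<longrightarrow> R Q P) \<and>
    (\<forall>P Q. R P Q \<longrightarrow>
       closedT P \<and> closedT Q \<and>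
       (\<not> is_abs P \<longrightarrow> \<not> is_abs Q) \<and>
       (\<forall>T U P'. scong P (AbsP T P') \<and> typing [T] P' U \<longrightarrow>
          (\<exists>Q'. scong Q (AbsP T Q') \<and>
             (\<forall>A. typing [] A T \<longrightarrow> R (psubst (inst A) P') (psubst (inst A) Q')))) \<and>
       (\<forall>U A. scong P (AbsN A) \<and> typing [] A U \<longrightarrow>
          (\<exists>B. scong Q (AbsN B) \<and> R A B)) \<and>
       (\<forall>a A P'. trans P (LOut (NC a) A) P' \<longrightarrow>
          (\<exists>B Q'. trans Q (LOut (NC a) B) Q' \<and> R A B \<and> R P' Q')) \<and>
       (\<forall>a T P'. trans P (LInp (NC a) T) P' \<longrightarrow>
          (\<exists>Q'. trans Q (LInp (NC a) T) Q' \<and>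
             (\<forall>A. typing [] A T \<longrightarrow> R (psubst (inst A) P') (psubst (inst A) Q')))) \<and>
       (\<forall>P'. trans P LTau P' \<longrightarrow> (\<exists>Q'. trans Q LTau Q' \<and> R P' Q')))"

definition ho_sim :: "trm \<Rightarrow> trm \<Rightarrow> bool" where
  "ho_sim P Q \<longleftrightarrow> (\<exists>R. ho_bisim R \<and> R P Q)"

text \<open>hpref h G P = h(X_1:T_1). ... .h(X_n:T_n). P where G = [T_n, ..., T_1]
  (G!i is the type of the process variable with de Bruijn index i; X_n has index 0).\<close>
fun hpref :: "nat \<Rightarrow> ty list \<Rightarrow> trm \<Rightarrow> trm" where
  "hpref h [] P = P"
| "hpref h (T # G) P = hpref h G (Inp (NC h) T P)"

end

theory Submission
  imports Defs "HOL-Library.Multiset"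
begin

abbreviation nsh :: "nat \<Rightarrow> nm" where "nsh \<equiv> (\<lambda>j. NV (Suc j))"

lemma nmap_nsh: "nmap nsh m = nmshift m" by (cases m) auto

lemma nmap_comp: "nmap f (nmap g m) = nmap (\<lambda>i. nmap f (g i)) m" by (cases m) auto

lemma upn_comp: "(\<lambda>i. nmap (upn f) (upn g i)) = upn (\<lambda>i. nmap f (g i))"
proof
  fix i show "nmap (upn f) (upn g i) = upn (\<lambda>i. nmap f (g i)) i"
    by (cases i; cases "g (i - 1)") (auto simp: upn_def)
qed

lemma nsubst_nsubst: "nsubst f (nsubst g P) = nsubst (\<lambda>i. nmap f (g i)) P"
  by (induction P arbitrary: f g) (auto simp: nmap_comp upn_comp)

lemma upn_NV: "upn NV = NV" by (auto simp: upn_def split: nat.split)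
lemma nmap_NV: "nmap NV m = m" by (cases m) auto
lemma nsubst_NV: "nsubst NV P = P"
  by (induction P) (auto simp: upn_NV nmap_NV)

lemma nsubst_renP: "nsubst f (renP g P) = renP g (nsubst f P)"
  by (induction P arbitrary: f g) auto

lemma nsubst_upn_nsh: "nsubst (upn f) (nsubst nsh X) = nsubst nsh (nsubst f X)"
  by (simp add: nsubst_nsubst upn_def nmap_nsh)

lemma nsubst_psubst: "nsubst f (psubst s P) = psubst (\<lambda>i. nsubst f (s i)) (nsubst f P)"
proof (induction P arbitrary: f s)
  case (Inp m T P)
  have "(\<lambda>i. nsubst f (upp s i)) = upp (\<lambda>i. nsubst f (s i))"
    by (auto simp: upp_def nsubst_renP split: nat.split)
  then show ?case using Inp by simp
next
  case (AbsP T P)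
  have "(\<lambda>i. nsubst f (upp s i)) = upp (\<lambda>i. nsubst f (s i))"
    by (auto simp: upp_def nsubst_renP split: nat.split)
  then show ?case using AbsP by simp
next
  case (AbsN P)
  then show ?case by (simp add: nsubst_upn_nsh)
qed auto

lemma upr_comp: "upr f \<circ> upr g = upr (f \<circ> g)"
  by (auto simp: upr_def split: nat.split)

lemma renP_renP: "renP f (renP g P) = renP (f \<circ> g) P"
  by (induction P arbitrary: f g) (auto simp: upr_comp[symmetric])

lemma psubst_renP: "psubst s (renP f P) = psubst (s \<circ> f) P"
proof (induction P arbitrary: s f)
  case (Inp m T P)
  have "(\<lambda>a. upp s (upr f a)) = upp (\<lambda>a. s (f a))" by (auto simp: upp_def upr_def split: nat.split)
  then show ?case using Inp by simp
next
  case (AbsP T P)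
  have "(\<lambda>a. upp s (upr f a)) = upp (\<lambda>a. s (f a))" by (auto simp: upp_def upr_def split: nat.split)
  then show ?case using AbsP by simp
next
  case (AbsN P) then show ?case by (simp add: comp_def)
qed auto

lemma renP_upp: "(\<lambda>i. renP (upr f) (upp s i)) = upp (\<lambda>i. renP f (s i))"
proof
  fix i show "renP (upr f) (upp s i) = upp (\<lambda>i. renP f (s i)) i"
    by (cases i) (auto simp: upp_def renP_renP upr_def comp_def)
qed

lemma renP_psubst: "renP f (psubst s P) = psubst (\<lambda>i. renP f (s i)) P"
proof (induction P arbitrary: s f)
  case (Inp m T P) then show ?case by (simp add: renP_upp)
next
  case (AbsP T P) then show ?case by (simp add: renP_upp)
next
  case (AbsN P) then show ?case by (simp add: nsubst_renP)
qed auto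

lemma psubst_upp: "(\<lambda>i. psubst (upp s) (upp t i)) = upp (\<lambda>i. psubst s (t i))"
proof
  fix i show "psubst (upp s) (upp t i) = upp (\<lambda>i. psubst s (t i)) i"
    by (cases i) (auto simp: upp_def psubst_renP renP_psubst comp_def)
qed

lemma psubst_psubst: "psubst s (psubst t P) = psubst (\<lambda>i. psubst s (t i)) P"
proof (induction P arbitrary: s t)
  case (Inp m T P) then show ?case by (simp add: psubst_upp)
next
  case (AbsP T P) then show ?case by (simp add: psubst_upp)
next
  case (AbsN P) then show ?case by (simp add: nsubst_psubst)
qed auto

lemma upp_PVar: "upp PVar = PVar" by (auto simp: upp_def split: nat.split)
lemma psubst_PVar: "psubst PVar P = P"
  by (induction P) (auto simp: upp_PVar)
lemma psubst_PVar': "psubst (\<lambda>i. PVar i) P = P" using psubst_PVar by (simp add: eta_contract_eq)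

lemma renP_psubst_PVar: "renP f P = psubst (\<lambda>i. PVar (f i)) P"
proof -
  have "renP f P = renP f (psubst PVar P)" by (simp add: psubst_PVar)
  also have "\<dots> = psubst (\<lambda>i. PVar (f i)) P" by (simp add: renP_psubst)
  finally show ?thesis .
qed

lemma psubst_beta: "psubst s (psubst (inst Q) P) = psubst (inst (psubst s Q)) (psubst (upp s) P)"
proof -
  have "(\<lambda>i. psubst s (inst Q i)) = (\<lambda>i. psubst (inst (psubst s Q)) (upp s i))"
  proof
    fix i show "psubst s (inst Q i) = psubst (inst (psubst s Q)) (upp s i)"
      by (cases i) (auto simp: inst_def upp_def psubst_renP comp_def psubst_PVar')
  qed
  then show ?thesis by (simp add: psubst_psubst)
qed

lemma ninst_nsh: "(\<lambda>i. nmap (ninst m) (NV (Suc i))) = NV"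
  by (auto simp: ninst_def)

lemma psubst_nbeta: "psubst s (nsubst (ninst m) P) = nsubst (ninst m) (psubst (\<lambda>i. nsubst nsh (s i)) P)"
proof -
  have e: "(\<lambda>i. ninst m (Suc i)) = NV" by (simp add: ninst_def)
  show ?thesis by (simp add: nsubst_psubst nsubst_nsubst e nsubst_NV)
qed

lemma renP_beta: "renP f (psubst (inst Q) P) = psubst (inst (renP f Q)) (renP (upr f) P)"
proof -
  have "(\<lambda>i. renP f (inst Q i)) = (inst (renP f Q) \<circ> upr f)"
    by (auto simp: inst_def upr_def split: nat.split)
  then show ?thesis by (simp add: renP_psubst psubst_renP)
qed

lemma nsubst_beta: "nsubst f (psubst (inst Q) P) = psubst (inst (nsubst f Q)) (nsubst f P)"
proof -
  have "(\<lambda>i. nsubst f (inst Q i)) = inst (nsubst f Q)"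
    by (auto simp: inst_def split: nat.split)
  then show ?thesis by (simp add: nsubst_psubst)
qed

lemma nsubst_nbeta: "nsubst f (nsubst (ninst m) P) = nsubst (ninst (nmap f m)) (nsubst (upn f) P)"
proof -
  have "(\<lambda>i. nmap f (ninst m i)) = (\<lambda>i. nmap (ninst (nmap f m)) (upn f i))"
  proof
    fix i show "nmap f (ninst m i) = nmap (ninst (nmap f m)) (upn f i)"
      by (cases i; cases "f (i - 1)") (auto simp: ninst_def upn_def)
  qed
  then show ?thesis by (simp add: nsubst_nsubst)
qed

lemma typing_renP:
  "typing G P T \<Longrightarrow> (\<forall>i<length G. f i < length G' \<and> G' ! f i = G ! i) \<Longrightarrow> typing G' (renP f P) T"
proof (induction G P T arbitrary: G' f rule: typing.induct)
  case (t_var i G) then show ?case by (metis renP.simps(2) typing.t_var)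
next
  case (t_inp T G P m)
  have "\<forall>i<length (T#G). upr f i < length (T#G') \<and> (T#G') ! upr f i = (T#G) ! i"
    using t_inp.prems by (auto simp: upr_def split: nat.split)
  then show ?case using t_inp by (auto intro: typing.intros)
next
  case (t_absP T G P U)
  have "\<forall>i<length (T#G). upr f i < length (T#G') \<and> (T#G') ! upr f i = (T#G) ! i"
    using t_absP.prems by (auto simp: upr_def split: nat.split)
  then show ?case using t_absP by (auto intro: typing.intros)
next
  case (t_appP G P T U Q) then show ?case by (metis renP.simps(7) typing.t_appP)
qed (auto intro: typing.intros)

lemma typing_var0: "typing (T#G) (PVar 0) T" using typing.t_var[of 0 "T#G"] by simp

lemma typing_shift: "typing G P T \<Longrightarrow> typing (U#G) (renP Suc P) T"
  by (erule typing_renP) auto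

lemma typing_nsubst: "typing G P T \<Longrightarrow> typing G (nsubst f P) T"
  by (induction G P T arbitrary: f rule: typing.induct) (auto intro: typing.intros)

lemma typing_psubst:
  "typing G P T \<Longrightarrow> (\<forall>i<length G. typing G' (s i) (G ! i)) \<Longrightarrow> typing G' (psubst s P) T"
proof (induction G P T arbitrary: G' s rule: typing.induct)
  case (t_inp T G P m)
  have "\<forall>i<length (T#G). typing (T#G') (upp s i) ((T#G) ! i)"
    using t_inp.prems by (auto simp: upp_def typing_shift typing_var0 split: nat.split)
  then show ?case using t_inp by (auto intro: typing.intros)
next
  case (t_absP T G P U)
  have "\<forall>i<length (T#G). typing (T#G') (upp s i) ((T#G) ! i)"
    using t_absP.prems by (auto simp: upp_def typing_shift typing_var0 split: nat.split)
  then show ?case using t_absP by (auto intro: typing.intros)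
next
  case (t_absN G P U)
  then show ?case by (metis psubst.simps(8) typing.t_absN typing_nsubst)
next
  case (t_appP G P T U Q) then show ?case by (metis psubst.simps(7) typing.t_appP)
qed (auto intro: typing.intros)

lemma typing_inst: "typing [T] P U \<Longrightarrow> typing [] A T \<Longrightarrow> typing [] (psubst (inst A) P) U"
  by (erule typing_psubst) (auto simp: inst_def)

lemma psubst_agree:
  "typing G P T \<Longrightarrow> (\<forall>i<length G. s i = s' i) \<Longrightarrow> psubst s P = psubst s' P"
proof (induction G P T arbitrary: s s' rule: typing.induct)
  case (t_inp T G P m)
  have "\<forall>i<length (T#G). upp s i = upp s' i" using t_inp.prems by (auto simp: upp_def split: nat.split)
  then show ?case using t_inp by auto
next
  case (t_absP T G P U)
  have "\<forall>i<length (T#G). upp s i = upp s' i" using t_absP.prems by (auto simp: upp_def split: nat.split)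
  then show ?case using t_absP by auto
next
  case (t_absN G P U)
  then show ?case by auto
qed auto

lemma psubst_closed: "typing [] A T \<Longrightarrow> psubst s A = A"
  using psubst_agree[of "[]" A T s PVar] by (simp add: psubst_PVar)

lemma scong_psubst: "scong P P' \<Longrightarrow> scong (psubst s P) (psubst s P')"
proof (induction P P' arbitrary: s rule: scong.induct)
  case (sc_betaP T P Q)
  then show ?case by (simp add: psubst_beta scong.sc_betaP)
next
  case (sc_betaN P m)
  then show ?case by (simp add: psubst_nbeta scong.sc_betaN)
qed (auto intro: scong.intros)

lemma scong_renP: "scong P P' \<Longrightarrow> scong (renP f P) (renP f P')"
  by (simp add: renP_psubst_PVar scong_psubst)

lemma trans_subject: "trans P l P' \<Longrightarrow> typing [] P T \<Longrightarrow> typing (labctx l) P' Pr"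
proof (induction P l P' arbitrary: T rule: trans.induct)
  case (tr_inp m T P) then show ?case by (auto elim: typing.cases)
next
  case (tr_out m Q) then show ?case by (auto intro: typing.intros)
next
  case (tr_parL P l P' Q)
  from tr_parL.prems obtain "typing [] P Pr" "typing [] Q Pr" by (auto elim: typing.cases)
  with tr_parL.IH show ?case
    by (cases l) (auto intro!: typing.intros typing_shift)
next
  case (tr_parR P l P' Q)
  from tr_parR.prems obtain "typing [] P Pr" "typing [] Q Pr" by (auto elim: typing.cases)
  with tr_parR.IH show ?case
    by (cases l) (auto intro!: typing.intros typing_shift)
next
  case (tr_commL P m A P' Q T Q')
  from tr_commL.prems obtain "typing [] P Pr" "typing [] Q Pr" by (auto elim: typing.cases)
  with tr_commL show ?case by (fastforce intro!: typing.intros typing_inst)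
next
  case (tr_commR P m A P' Q T Q')
  from tr_commR.prems obtain "typing [] P Pr" "typing [] Q Pr" by (auto elim: typing.cases)
  with tr_commR show ?case by (fastforce intro!: typing.intros typing_inst)
qed auto

lemma trans_typed: "trans X l X' \<Longrightarrow> typing [] X T \<Longrightarrow> \<exists>P1. typing [] P1 Pr \<and> scong X P1 \<and> trans P1 l X'"
proof (induction X l X' rule: trans.induct)
  case (tr_cong P P1 l P1' P')
  then show ?case by (meson scong.sc_refl trans.tr_cong)
qed (auto elim: typing.cases intro: scong.sc_refl trans.intros)

lemma trans_transfer: "scong X0 X \<Longrightarrow> closedT X \<Longrightarrow> trans X l X' \<Longrightarrow> trans X0 l X'"
proof -
  assume a: "scong X0 X" "closedT X" "trans X l X'"
  then obtain T where T: "typing [] X T" by (auto simp: closedT_def)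
  from trans_typed[OF a(3) T] obtain P1 where p: "typing [] P1 Pr" "scong X P1" "trans P1 l X'" by blast
  have "typing (labctx l) X' Pr" using trans_subject[OF a(3) T] .
  then show ?thesis using p a(1) by (meson scong.sc_refl scong.sc_trans trans.tr_cong)
qed

inductive pr :: "trm \<Rightarrow> trm \<Rightarrow> bool" where
  pr_nil: "pr PNil PNil"
| pr_var: "pr (PVar i) (PVar i)"
| pr_inp: "pr P P' \<Longrightarrow> pr (Inp m T P) (Inp m T P')"
| pr_out: "pr P P' \<Longrightarrow> pr (Out m P) (Out m P')"
| pr_par: "pr P P' \<Longrightarrow> pr Q Q' \<Longrightarrow> pr (Par P Q) (Par P' Q')"
| pr_absP: "pr P P' \<Longrightarrow> pr (AbsP T P) (AbsP T P')"
| pr_appP: "pr P P' \<Longrightarrow> pr Q Q' \<Longrightarrow> pr (AppP P Q) (AppP P' Q')"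
| pr_absN: "pr P P' \<Longrightarrow> pr (AbsN P) (AbsN P')"
| pr_appN: "pr P P' \<Longrightarrow> pr (AppN P m) (AppN P' m)"
| pr_beta: "pr P P' \<Longrightarrow> pr Q Q' \<Longrightarrow> pr (AppP (AbsP T P) Q) (psubst (inst Q') P')"
| pr_nbeta: "pr P P' \<Longrightarrow> pr (AppN (AbsN P) m) (nsubst (ninst m) P')"
| pr_nilR: "pr P P' \<Longrightarrow> pr (Par P PNil) P'"
| pr_nilL: "pr P P' \<Longrightarrow> pr (Par PNil P) P'"

lemma pr_refl[simp, intro]: "pr P P"
  by (induction P) (auto intro: pr.intros)

lemma pr_renP: "pr P P' \<Longrightarrow> pr (renP f P) (renP f P')"
proof (induction P P' arbitrary: f rule: pr.induct)
  case (pr_beta P P' Q Q' T)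
  then show ?case by (simp add: renP_beta pr.pr_beta)
next
  case (pr_nbeta P P' m)
  then show ?case by (simp add: nsubst_renP[symmetric] pr.pr_nbeta)
qed (auto intro: pr.intros)

lemma pr_nsubst: "pr P P' \<Longrightarrow> pr (nsubst f P) (nsubst f P')"
proof (induction P P' arbitrary: f rule: pr.induct)
  case (pr_beta P P' Q Q' T)
  then show ?case by (simp add: nsubst_beta pr.pr_beta)
next
  case (pr_nbeta P P' m)
  then show ?case by (simp add: nsubst_nbeta pr.pr_nbeta)
qed (auto intro: pr.intros)

lemma pr_upp: "\<forall>i. pr (s i) (s' i) \<Longrightarrow> \<forall>i. pr (upp s i) (upp s' i)"
  by (auto simp: upp_def pr_renP split: nat.split)

lemma pr_psubst: "pr P P' \<Longrightarrow> (\<forall>i. pr (s i) (s' i)) \<Longrightarrow> pr (psubst s P) (psubst s' P')"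
proof (induction P P' arbitrary: s s' rule: pr.induct)
  case (pr_inp P P' m T) then show ?case by (simp add: pr.pr_inp pr_upp)
next
  case (pr_absP P P' T) then show ?case by (simp add: pr.pr_absP pr_upp)
next
  case (pr_absN P P')
  have "\<forall>i. pr (nsubst nsh (s i)) (nsubst nsh (s' i))" using pr_absN.prems by (simp add: pr_nsubst)
  then show ?case using pr_absN.IH by (simp add: pr.pr_absN)
next
  case (pr_beta P P' Q Q' T)
  have "pr (AppP (AbsP T (psubst (upp s) P)) (psubst s Q)) (psubst (inst (psubst s' Q')) (psubst (upp s') P'))"
    using pr_beta by (auto intro!: pr.intros pr_upp)
  then show ?case by (simp add: psubst_beta)
next
  case (pr_nbeta P P' m)
  have "pr (AppN (AbsN (psubst (\<lambda>i. nsubst nsh (s i)) P)) m) (nsubst (ninst m) (psubst (\<lambda>i. nsubst nsh (s' i)) P'))"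
  proof (rule pr.pr_nbeta, rule pr_nbeta.IH)
    show "\<forall>i. pr (nsubst nsh (s i)) (nsubst nsh (s' i))" using pr_nbeta.prems by (simp add: pr_nsubst)
  qed
  then show ?case by (simp add: psubst_nbeta)
qed (auto intro: pr.intros)

fun cd :: "trm \<Rightarrow> trm" where
  "cd PNil = PNil"
| "cd (PVar i) = PVar i"
| "cd (Inp m T P) = Inp m T (cd P)"
| "cd (Out m P) = Out m (cd P)"
| "cd (Par P Q) = (if Q = PNil then cd P else if P = PNil then cd Q else Par (cd P) (cd Q))"
| "cd (AbsP T P) = AbsP T (cd P)"
| "cd (AppP (AbsP T P) Q) = psubst (inst (cd Q)) (cd P)"
| "cd (AppP P Q) = AppP (cd P) (cd Q)"
| "cd (AbsN P) = AbsN (cd P)"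
| "cd (AppN (AbsN P) m) = nsubst (ninst m) (cd P)"
| "cd (AppN P m) = AppN (cd P) m"

lemma pr_PNil_inv: "pr PNil X \<Longrightarrow> X = PNil" by (erule pr.cases) auto
lemma pr_AbsP_inv: "pr (AbsP T P) X \<Longrightarrow> \<exists>P'. X = AbsP T P' \<and> pr P P'" by (erule pr.cases) auto
lemma pr_AbsN_inv: "pr (AbsN P) X \<Longrightarrow> \<exists>P'. X = AbsN P' \<and> pr P P'" by (erule pr.cases) auto
lemma pr_Inp_inv: "pr (Inp m T P) X \<Longrightarrow> \<exists>P'. X = Inp m T P' \<and> pr P P'" by (erule pr.cases) auto
lemma pr_Out_inv: "pr (Out m P) X \<Longrightarrow> \<exists>P'. X = Out m P' \<and> pr P P'" by (erule pr.cases) auto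
lemma pr_Par_inv: "pr (Par P Q) X \<Longrightarrow> (\<exists>P' Q'. X = Par P' Q' \<and> pr P P' \<and> pr Q Q') \<or> (Q = PNil \<and> pr P X) \<or> (P = PNil \<and> pr Q X)"
  by (erule pr.cases) auto

lemma pr_inst: "pr Q Q' \<Longrightarrow> \<forall>i. pr (inst Q i) (inst Q' i)"
  by (auto simp: inst_def split: nat.split)

lemma pr_cd: "pr P Q \<Longrightarrow> pr Q (cd P)"
proof (induction P Q rule: pr.induct)
  case (pr_par P P' Q Q')
  then show ?case by (auto dest: pr_PNil_inv intro: pr.intros)
next
  case (pr_appP P P' Q Q')
  show ?case
  proof (cases "\<exists>T P0. P = AbsP T P0")
    case True
    then obtain T P0 where P: "P = AbsP T P0" by blast
    from pr_appP.hyps(1)[unfolded P] obtain P0' where P': "P' = AbsP T P0'" "pr P0 P0'"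
      using pr_AbsP_inv by blast
    from pr_appP.IH(1)[unfolded P P'] have "pr P0' (cd P0)" by (auto dest: pr_AbsP_inv)
    then show ?thesis using P P' pr_appP.IH(2) by (auto intro: pr.intros)
  next
    case False
    then have "cd (AppP P Q) = AppP (cd P) (cd Q)" by (cases P) auto
    then show ?thesis using pr_appP by (auto intro: pr.intros)
  qed
next
  case (pr_appN P P' m)
  show ?case
  proof (cases "\<exists>P0. P = AbsN P0")
    case True
    then obtain P0 where P: "P = AbsN P0" by blast
    from pr_appN.hyps(1)[unfolded P] obtain P0' where P': "P' = AbsN P0'" "pr P0 P0'"
      using pr_AbsN_inv by blast
    from pr_appN.IH[unfolded P P'] have "pr P0' (cd P0)" by (auto dest: pr_AbsN_inv)
    then show ?thesis using P P' by (auto intro: pr.intros)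
  next
    case False
    then have "cd (AppN P m) = AppN (cd P) m" by (cases P) auto
    then show ?thesis using pr_appN by (auto intro: pr.intros)
  qed
next
  case (pr_beta P P' Q Q' T)
  then show ?case by (auto intro!: pr_psubst pr_inst)
next
  case (pr_nbeta P P' m)
  then show ?case by (auto intro!: pr_nsubst)
next
  case (pr_nilL P P')
  then show ?case by auto
qed (auto intro: pr.intros)

lemma pr_diamond: "pr P A \<Longrightarrow> pr P B \<Longrightarrow> \<exists>C. pr A C \<and> pr B C"
  using pr_cd by blast

lemma pr_strip: "pr\<^sup>*\<^sup>* P B \<Longrightarrow> pr P A \<Longrightarrow> \<exists>C. pr\<^sup>*\<^sup>* A C \<and> pr B C"
proof (induction B arbitrary: A rule: rtranclp_induct)
  case base then show ?case by blast
next
  case (step B0 B)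
  then obtain C0 where "pr\<^sup>*\<^sup>* A C0" "pr B0 C0" by blast
  with pr_diamond[OF \<open>pr B0 C0\<close> \<open>pr B0 B\<close>] show ?case
    by (meson rtranclp.rtrancl_into_rtrancl)
qed

lemma pr_CR: "pr\<^sup>*\<^sup>* P A \<Longrightarrow> pr\<^sup>*\<^sup>* P B \<Longrightarrow> \<exists>C. pr\<^sup>*\<^sup>* A C \<and> pr\<^sup>*\<^sup>* B C"
proof (induction A arbitrary: B rule: rtranclp_induct)
  case base then show ?case by blast
next
  case (step A0 A)
  then obtain C0 where "pr\<^sup>*\<^sup>* A0 C0" "pr\<^sup>*\<^sup>* B C0" by blast
  with pr_strip[OF \<open>pr\<^sup>*\<^sup>* A0 C0\<close> \<open>pr A0 A\<close>] show ?case
    by (meson rtranclp.rtrancl_into_rtrancl)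
qed

lemma pr_scong: "pr P P' \<Longrightarrow> scong P P'"
proof (induction P P' rule: pr.induct)
  case (pr_beta P P' Q Q' T)
  then show ?case by (meson scong.sc_absP scong.sc_appP scong.sc_betaP scong.sc_trans)
next
  case (pr_nbeta P P' m)
  then show ?case by (meson scong.sc_absN scong.sc_appN scong.sc_betaN scong.sc_trans)
next
  case (pr_nilR P P')
  then show ?case by (meson scong.sc_nil scong.sc_trans)
next
  case (pr_nilL P P')
  then show ?case by (meson scong.sc_comm scong.sc_nil scong.sc_trans)
qed (auto intro: scong.intros)

lemma prs_scong: "pr\<^sup>*\<^sup>* P P' \<Longrightarrow> scong P P'"
  by (induction rule: rtranclp_induct) (auto intro: scong.intros pr_scong)

lemma prs_inp: "pr\<^sup>*\<^sup>* P P' \<Longrightarrow> pr\<^sup>*\<^sup>* (Inp m T P) (Inp m T P')"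
  by (induction rule: rtranclp_induct) (auto intro: pr.intros rtranclp.rtrancl_into_rtrancl)
lemma prs_out: "pr\<^sup>*\<^sup>* P P' \<Longrightarrow> pr\<^sup>*\<^sup>* (Out m P) (Out m P')"
  by (induction rule: rtranclp_induct) (auto intro: pr.intros rtranclp.rtrancl_into_rtrancl)
lemma prs_absP: "pr\<^sup>*\<^sup>* P P' \<Longrightarrow> pr\<^sup>*\<^sup>* (AbsP T P) (AbsP T P')"
  by (induction rule: rtranclp_induct) (auto intro: pr.intros rtranclp.rtrancl_into_rtrancl)
lemma prs_absN: "pr\<^sup>*\<^sup>* P P' \<Longrightarrow> pr\<^sup>*\<^sup>* (AbsN P) (AbsN P')"
  by (induction rule: rtranclp_induct) (auto intro: pr.intros rtranclp.rtrancl_into_rtrancl)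
lemma prs_appN: "pr\<^sup>*\<^sup>* P P' \<Longrightarrow> pr\<^sup>*\<^sup>* (AppN P m) (AppN P' m)"
  by (induction rule: rtranclp_induct) (auto intro: pr.intros rtranclp.rtrancl_into_rtrancl)
lemma prs_parL: "pr\<^sup>*\<^sup>* P P' \<Longrightarrow> pr\<^sup>*\<^sup>* (Par P Q) (Par P' Q)"
  by (induction rule: rtranclp_induct) (auto intro: pr.intros rtranclp.rtrancl_into_rtrancl)
lemma prs_parR: "pr\<^sup>*\<^sup>* Q Q' \<Longrightarrow> pr\<^sup>*\<^sup>* (Par P Q) (Par P Q')"
  by (induction rule: rtranclp_induct) (auto intro: pr.intros rtranclp.rtrancl_into_rtrancl)
lemma prs_par: "pr\<^sup>*\<^sup>* P P' \<Longrightarrow> pr\<^sup>*\<^sup>* Q Q' \<Longrightarrow> pr\<^sup>*\<^sup>* (Par P Q) (Par P' Q')"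
  by (meson prs_parL prs_parR rtranclp_trans)
lemma prs_appPL: "pr\<^sup>*\<^sup>* P P' \<Longrightarrow> pr\<^sup>*\<^sup>* (AppP P Q) (AppP P' Q)"
  by (induction rule: rtranclp_induct) (auto intro: pr.intros rtranclp.rtrancl_into_rtrancl)
lemma prs_appPR: "pr\<^sup>*\<^sup>* Q Q' \<Longrightarrow> pr\<^sup>*\<^sup>* (AppP P Q) (AppP P Q')"
  by (induction rule: rtranclp_induct) (auto intro: pr.intros rtranclp.rtrancl_into_rtrancl)
lemma prs_appP: "pr\<^sup>*\<^sup>* P P' \<Longrightarrow> pr\<^sup>*\<^sup>* Q Q' \<Longrightarrow> pr\<^sup>*\<^sup>* (AppP P Q) (AppP P' Q')"
  by (meson prs_appPL prs_appPR rtranclp_trans)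

lemma prs_PNil_inv: "pr\<^sup>*\<^sup>* PNil X \<Longrightarrow> X = PNil"
  by (induction rule: rtranclp_induct) (auto dest: pr_PNil_inv)
lemma prs_Inp_inv: "pr\<^sup>*\<^sup>* (Inp m T P) X \<Longrightarrow> \<exists>P'. X = Inp m T P' \<and> pr\<^sup>*\<^sup>* P P'"
  by (induction rule: rtranclp_induct) (auto dest!: pr_Inp_inv intro: rtranclp.rtrancl_into_rtrancl)
lemma prs_Out_inv: "pr\<^sup>*\<^sup>* (Out m P) X \<Longrightarrow> \<exists>P'. X = Out m P' \<and> pr\<^sup>*\<^sup>* P P'"
  by (induction rule: rtranclp_induct) (auto dest!: pr_Out_inv intro: rtranclp.rtrancl_into_rtrancl)
lemma prs_AbsP_inv: "pr\<^sup>*\<^sup>* (AbsP T P) X \<Longrightarrow> \<exists>P'. X = AbsP T P' \<and> pr\<^sup>*\<^sup>* P P'"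
  by (induction rule: rtranclp_induct) (auto dest!: pr_AbsP_inv intro: rtranclp.rtrancl_into_rtrancl)
lemma prs_AbsN_inv: "pr\<^sup>*\<^sup>* (AbsN P) X \<Longrightarrow> \<exists>P'. X = AbsN P' \<and> pr\<^sup>*\<^sup>* P P'"
  by (induction rule: rtranclp_induct) (auto dest!: pr_AbsN_inv intro: rtranclp.rtrancl_into_rtrancl)

lemma prs_Par_inv: "pr\<^sup>*\<^sup>* (Par P Q) X \<Longrightarrow>
   (\<exists>P' Q'. X = Par P' Q' \<and> pr\<^sup>*\<^sup>* P P' \<and> pr\<^sup>*\<^sup>* Q Q') \<or> (pr\<^sup>*\<^sup>* Q PNil \<and> pr\<^sup>*\<^sup>* P X) \<or> (pr\<^sup>*\<^sup>* P PNil \<and> pr\<^sup>*\<^sup>* Q X)"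
proof (induction rule: rtranclp_induct)
  case base then show ?case by auto
next
  case (step Y X)
  from step.IH show ?case
  proof (elim disjE exE conjE)
    fix P' Q' assume Y: "Y = Par P' Q'" and a: "pr\<^sup>*\<^sup>* P P'" "pr\<^sup>*\<^sup>* Q Q'"
    from pr_Par_inv[OF step.hyps(2)[unfolded Y]] show ?thesis
      using a by (auto intro: rtranclp.rtrancl_into_rtrancl)
  qed (use step.hyps(2) in \<open>auto intro: rtranclp.rtrancl_into_rtrancl\<close>)
qed

lemma rm_plus: "rel_mset R A C \<Longrightarrow> rel_mset R B D \<Longrightarrow> rel_mset R (A + B) (C + D)"
proof (induction A arbitrary: C)
  case empty then show ?case by simp
next
  case (add a A)
  from msed_rel_invL[OF add.prems(1)] obtain C1 c where "C = add_mset c C1" "R a c" "rel_mset R A C1" by blast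
  with add show ?case by (simp add: rel_mset_Plus)
qed

lemma rm_split: "rel_mset R (M1 + M2) N \<Longrightarrow> \<exists>N1 N2. N = N1 + N2 \<and> rel_mset R M1 N1 \<and> rel_mset R M2 N2"
proof (induction M1 arbitrary: N)
  case empty then show ?case by (auto simp: rel_mset_Zero)
next
  case (add a M1)
  from msed_rel_invL[of R a "M1 + M2" N] add.prems obtain N' b where
    "N = add_mset b N'" "R a b" "rel_mset R (M1 + M2) N'" by auto
  with add.IH[of N'] show ?case by (metis add_mset_add_single rel_mset_Plus union_assoc union_commute)
qed

lemma rm_single: "rel_mset R {#x#} N \<longleftrightarrow> (\<exists>y. N = {#y#} \<and> R x y)"
proof
  assume "rel_mset R {#x#} N"
  from msed_rel_invL[OF this] show "\<exists>y. N = {#y#} \<and> R x y" by auto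
next
  assume "\<exists>y. N = {#y#} \<and> R x y"
  then show "rel_mset R {#x#} N" by (auto intro: rel_mset_Plus rel_mset_Zero)
qed

lemma rm_sum: "rel_mset R M N \<Longrightarrow> (\<And>x y. R x y \<Longrightarrow> rel_mset S (f x) (g y)) \<Longrightarrow>
   rel_mset S (\<Sum>x\<in>#M. f x) (\<Sum>y\<in>#N. g y)"
proof (induction M arbitrary: N)
  case empty then show ?case by (simp add: rel_mset_Zero)
next
  case (add a M)
  from msed_rel_invL[OF add.prems(1)] obtain N1 b where "N = add_mset b N1" "R a b" "rel_mset R M N1" by blast
  with add show ?case by (simp add: rm_plus)
qed

lemma rm_choose: "rel_mset S M N \<Longrightarrow> (\<And>x y. S x y \<Longrightarrow> \<exists>z. T x z \<and> U y z) \<Longrightarrow>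
   \<exists>K. rel_mset T M K \<and> rel_mset U N K"
proof (induction M arbitrary: N)
  case empty then show ?case by (auto simp: rel_mset_Zero)
next
  case (add a M)
  from msed_rel_invL[OF add.prems(1)] obtain N1 b where "N = add_mset b N1" "S a b" "rel_mset S M N1" by blast
  with add obtain K z where "rel_mset T M K" "rel_mset U N1 K" "T a z" "U b z" by meson
  then show ?case using \<open>N = _\<close> by (auto intro: rel_mset_Plus)
qed

lemma rm_mem: "rel_mset R M N \<Longrightarrow> x \<in># M \<Longrightarrow> \<exists>y\<in>#N. R x y"
proof (induction M arbitrary: N)
  case empty then show ?case by simp
next
  case (add a M)
  from msed_rel_invL[OF add.prems(1)] obtain N1 b where "N = add_mset b N1" "R a b" "rel_mset R M N1" by blast
  with add show ?case by auto
qed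

lemma rm_mem2: "rel_mset R M N \<Longrightarrow> y \<in># N \<Longrightarrow> \<exists>x\<in>#M. R x y"
  using rm_mem[of "conversep R" N M y] by (simp add: multiset.rel_flip)

lemma rm_refl: "(\<And>x. x \<in># M \<Longrightarrow> R x x) \<Longrightarrow> rel_mset R M M"
  by (rule multiset.rel_refl_strong) auto

lemma rm_mono: "rel_mset R M N \<Longrightarrow> (\<And>x y. x \<in># M \<Longrightarrow> y \<in># N \<Longrightarrow> R x y \<Longrightarrow> S x y) \<Longrightarrow> rel_mset S M N"
  using multiset.rel_mono_strong[of R M N S] by blast

fun atomsl :: "trm \<Rightarrow> trm list" where
  "atomsl (Par P Q) = atomsl P @ atomsl Q"
| "atomsl P = [P]"

definition atoms :: "trm \<Rightarrow> trm multiset" where "atoms P = mset (atomsl P)"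

definition is_par :: "trm \<Rightarrow> bool" where "is_par X \<longleftrightarrow> (\<exists>P Q. X = Par P Q)"

lemma is_par_simps[simp]: "is_par (Par P Q)" "\<not> is_par PNil" "\<not> is_par (PVar i)" "\<not> is_par (Inp m T P)"
  "\<not> is_par (Out m P)" "\<not> is_par (AbsP T P)" "\<not> is_par (AppP P Q)" "\<not> is_par (AbsN P)" "\<not> is_par (AppN P n)"
  by (auto simp: is_par_def)

lemma atoms_Par[simp]: "atoms (Par P Q) = atoms P + atoms Q" by (simp add: atoms_def)
lemma atoms_nonpar: "\<not> is_par X \<Longrightarrow> atoms X = {#X#}"
  by (cases X) (auto simp: atoms_def)
lemma atoms_ne[simp]: "atoms X \<noteq> {#}"
  by (induction X) (auto simp: atoms_def)
lemma atoms_notpar: "x \<in># atoms X \<Longrightarrow> \<not> is_par x"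
  by (induction X) (auto simp: atoms_def is_par_def)
lemma atoms_size: "x \<in># atoms X \<Longrightarrow> size x \<le> size X"
  by (induction X) (auto simp: atoms_def)
lemma atoms_size_par: "is_par X \<Longrightarrow> x \<in># atoms X \<Longrightarrow> size x < size X"
proof -
  assume "is_par X" "x \<in># atoms X"
  then obtain P Q where "X = Par P Q" by (auto simp: is_par_def)
  with \<open>x \<in># atoms X\<close> show ?thesis using atoms_size[of x P] atoms_size[of x Q] by auto
qed
lemma atoms_size_ge2: "is_par X \<Longrightarrow> size (atoms X) \<ge> 2"
proof -
  have "size (atoms X) \<ge> 1" for X by (metis atoms_ne less_one not_less size_eq_0_iff_empty)
  then show "is_par X \<Longrightarrow> size (atoms X) \<ge> 2" by (auto simp: is_par_def, metis add_le_mono One_nat_def one_add_one)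
qed

inductive acr :: "trm \<Rightarrow> trm \<Rightarrow> bool" where
  ac_par: "is_par A \<Longrightarrow> is_par B \<Longrightarrow> rel_mset acr (atoms A) (atoms B) \<Longrightarrow> acr A B"
| ac_nil: "acr PNil PNil"
| ac_var: "acr (PVar i) (PVar i)"
| ac_inp: "acr P P' \<Longrightarrow> acr (Inp m T P) (Inp m T P')"
| ac_out: "acr P P' \<Longrightarrow> acr (Out m P) (Out m P')"
| ac_absP: "acr P P' \<Longrightarrow> acr (AbsP T P) (AbsP T P')"
| ac_appP: "acr P P' \<Longrightarrow> acr Q Q' \<Longrightarrow> acr (AppP P Q) (AppP P' Q')"
| ac_absN: "acr P P' \<Longrightarrow> acr (AbsN P) (AbsN P')"
| ac_appN: "acr P P' \<Longrightarrow> acr (AppN P m) (AppN P' m)"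
monos multiset.rel_mono

lemma acr_refl[simp, intro]: "acr X X"
proof (induction X rule: measure_induct_rule[of size])
  case (less X)
  show ?case
  proof (cases "is_par X")
    case True
    have "rel_mset acr (atoms X) (atoms X)" by (rule rm_refl) (use less atoms_size_par[OF True] in blast)
    then show ?thesis by (rule ac_par[OF True True])
  next
    case False
    then show ?thesis using less by (cases X) (auto intro: acr.intros(2-9))
  qed
qed

lemma acr_sym: "acr A B \<Longrightarrow> acr B A"
proof (induction rule: acr.induct)
  case (ac_par A B)
  have "rel_mset (\<lambda>y x. acr x y \<and> acr y x) (atoms B) (atoms A)"
    using ac_par(3) multiset.rel_flip[symmetric, of _ "atoms B" "atoms A"] by (simp add: conversep_iff[abs_def])
  then have "rel_mset acr (atoms B) (atoms A)" by (rule rm_mono) auto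
  with ac_par show ?case by (auto intro: acr.ac_par)
qed (auto intro: acr.intros(2-9))

lemma acr_is_par: "acr A B \<Longrightarrow> is_par A = is_par B"
  by (erule acr.cases) auto

lemma acr_atoms: "acr A B \<Longrightarrow> rel_mset acr (atoms A) (atoms B)"
proof -
  assume a: "acr A B"
  show ?thesis
  proof (cases "is_par A")
    case True
    from a show ?thesis by (cases rule: acr.cases) (use True in auto)
  next
    case False
    then have "\<not> is_par B" using acr_is_par[OF a] by simp
    then show ?thesis using False a by (simp add: atoms_nonpar rm_single)
  qed
qed

lemma atoms_acr: "rel_mset acr (atoms A) (atoms B) \<Longrightarrow> acr A B"
proof -
  assume r: "rel_mset acr (atoms A) (atoms B)"
  have sz: "size (atoms A) = size (atoms B)" using rel_mset_size[OF r] .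
  show ?thesis
  proof (cases "is_par A"; cases "is_par B")
    assume "is_par A" "is_par B" then show ?thesis using r by (rule ac_par)
  next
    assume "is_par A" "\<not> is_par B" then show ?thesis using sz atoms_size_ge2[of A] by (simp add: atoms_nonpar)
  next
    assume "\<not> is_par A" "is_par B" then show ?thesis using sz atoms_size_ge2[of B] by (simp add: atoms_nonpar)
  next
    assume "\<not> is_par A" "\<not> is_par B" then show ?thesis using r by (simp add: atoms_nonpar rm_single)
  qed
qed

lemma acr_trans: "acr A B \<Longrightarrow> acr B C \<Longrightarrow> acr A C"
proof (induction arbitrary: C rule: acr.induct)
  case (ac_par A B)
  have "(rel_mset (\<lambda>x y. acr x y \<and> (\<forall>C. acr y C \<longrightarrow> acr x C)) OO rel_mset acr) (atoms A) (atoms C)"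
    using ac_par(3) acr_atoms[OF ac_par(4)] by (rule relcomppI)
  then have "rel_mset ((\<lambda>x y. acr x y \<and> (\<forall>C. acr y C \<longrightarrow> acr x C)) OO acr) (atoms A) (atoms C)"
    by (simp only: multiset.rel_compp)
  then have "rel_mset acr (atoms A) (atoms C)" by (rule rm_mono) auto
  then show ?case by (rule atoms_acr)
next
  case ac_nil then show ?case by simp
next
  case ac_var then show ?case by simp
next
  case (ac_inp P P' m T) from ac_inp.prems show ?case by (cases rule: acr.cases) (auto intro: acr.intros(2-9) ac_inp.IH)
next
  case (ac_out P P' m) from ac_out.prems show ?case by (cases rule: acr.cases) (auto intro: acr.intros(2-9) ac_out.IH)
next
  case (ac_absP P P' T) from ac_absP.prems show ?case by (cases rule: acr.cases) (auto intro: acr.intros(2-9) ac_absP.IH)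
next
  case (ac_appP P P' Q Q') from ac_appP.prems show ?case by (cases rule: acr.cases) (auto intro: acr.intros(2-9) ac_appP.IH)
next
  case (ac_absN P P') from ac_absN.prems show ?case by (cases rule: acr.cases) (auto intro: acr.intros(2-9) ac_absN.IH)
next
  case (ac_appN P P' m) from ac_appN.prems show ?case by (cases rule: acr.cases) (auto intro: acr.intros(2-9) ac_appN.IH)
qed

lemma acr_PNil: "acr PNil X \<Longrightarrow> X = PNil" by (erule acr.cases) auto
lemma acr_PNil': "acr X PNil \<Longrightarrow> X = PNil" by (erule acr.cases) auto
lemma acr_Inp: "acr (Inp m T P) X \<Longrightarrow> \<exists>P'. X = Inp m T P' \<and> acr P P'" by (erule acr.cases) auto
lemma acr_Out: "acr (Out m P) X \<Longrightarrow> \<exists>P'. X = Out m P' \<and> acr P P'" by (erule acr.cases) auto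
lemma acr_AbsP: "acr (AbsP T P) X \<Longrightarrow> \<exists>P'. X = AbsP T P' \<and> acr P P'" by (erule acr.cases) auto
lemma acr_AbsN: "acr (AbsN P) X \<Longrightarrow> \<exists>P'. X = AbsN P' \<and> acr P P'" by (erule acr.cases) auto
lemma acr_AppP: "acr (AppP P Q) X \<Longrightarrow> \<exists>P' Q'. X = AppP P' Q' \<and> acr P P' \<and> acr Q Q'" by (erule acr.cases) auto
lemma acr_AppN: "acr (AppN P m) X \<Longrightarrow> \<exists>P'. X = AppN P' m \<and> acr P P'" by (erule acr.cases) auto
lemma acr_PVar: "acr (PVar i) X \<Longrightarrow> X = PVar i" by (erule acr.cases) auto

lemma acr_par_cong: "acr P P' \<Longrightarrow> acr Q Q' \<Longrightarrow> acr (Par P Q) (Par P' Q')"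
  by (rule ac_par) (simp_all, rule rm_plus[OF acr_atoms acr_atoms])

lemma atoms_hom: "(\<And>P Q. F (Par P Q) = Par (F P) (F Q)) \<Longrightarrow> atoms (F X) = (\<Sum>x\<in>#atoms X. atoms (F x))"
  by (induction X) (auto simp: atoms_nonpar)

lemma acr_hom_par:
  assumes "rel_mset (\<lambda>x y. acr x y \<and> \<Phi> x y) (atoms A) (atoms B)"
    and "\<And>x y. \<Phi> x y \<Longrightarrow> acr (F x) (G y)"
    and "\<And>P Q. F (Par P Q) = Par (F P) (F Q)" "\<And>P Q. G (Par P Q) = Par (G P) (G Q)"
  shows "acr (F A) (G B)"
proof (rule atoms_acr)
  have "rel_mset acr (\<Sum>x\<in>#atoms A. atoms (F x)) (\<Sum>y\<in>#atoms B. atoms (G y))"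
    by (rule rm_sum[OF assms(1)]) (simp add: acr_atoms assms(2))
  moreover have "atoms (F A) = (\<Sum>x\<in>#atoms A. atoms (F x))" by (rule atoms_hom) (rule assms(3))
  moreover have "atoms (G B) = (\<Sum>x\<in>#atoms B. atoms (G x))" by (rule atoms_hom) (rule assms(4))
  ultimately show "rel_mset acr (atoms (F A)) (atoms (G B))" by metis
qed

lemma acr_renP: "acr A B \<Longrightarrow> acr (renP f A) (renP f B)"
proof (induction arbitrary: f rule: acr.induct)
  case (ac_par A B)
  show ?case by (rule acr_hom_par[OF ac_par(3)]) auto
qed (auto intro: acr.intros(2-9))

lemma acr_nsubst: "acr A B \<Longrightarrow> acr (nsubst f A) (nsubst f B)"
proof (induction arbitrary: f rule: acr.induct)
  case (ac_par A B)
  show ?case by (rule acr_hom_par[OF ac_par(3)]) auto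
qed (auto intro: acr.intros(2-9))

lemma acr_psubst: "acr A B \<Longrightarrow> (\<forall>i. acr (s i) (s' i)) \<Longrightarrow> acr (psubst s A) (psubst s' B)"
proof (induction arbitrary: s s' rule: acr.induct)
  case (ac_par A B)
  show ?case by (rule acr_hom_par[OF ac_par(3)]) (use ac_par.prems in auto)
next
  case (ac_inp P P' m T)
  have "\<forall>i. acr (upp s i) (upp s' i)" using ac_inp.prems by (auto simp: upp_def acr_renP split: nat.split)
  then show ?case using ac_inp.IH by (simp add: acr.ac_inp)
next
  case (ac_absP P P' T)
  have "\<forall>i. acr (upp s i) (upp s' i)" using ac_absP.prems by (auto simp: upp_def acr_renP split: nat.split)
  then show ?case using ac_absP.IH by (simp add: acr.ac_absP)
next
  case (ac_absN P P')
  have "\<forall>i. acr (nsubst nsh (s i)) (nsubst nsh (s' i))" using ac_absN.prems by (simp add: acr_nsubst)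
  then show ?case using ac_absN.IH by (simp add: acr.ac_absN)
qed (auto intro: acr.intros(2-9))

fun oatoms :: "trm option \<Rightarrow> trm multiset" where
  "oatoms None = {#}"
| "oatoms (Some a) = atoms a"

definition dr :: "trm \<Rightarrow> trm option \<Rightarrow> bool" where
  "dr a u \<longleftrightarrow> (u = None \<and> a = PNil) \<or> (\<exists>a'. u = Some a' \<and> pr a a')"

definition tr :: "trm \<Rightarrow> trm option \<Rightarrow> bool" where
  "tr b u \<longleftrightarrow> (u = None \<and> b = PNil) \<or> (\<exists>b'. u = Some b' \<and> pr\<^sup>*\<^sup>* b b')"

lemma decomp: "pr A A' \<Longrightarrow> \<exists>Os. rel_mset dr (atoms A) Os \<and> atoms A' = (\<Sum>u\<in>#Os. oatoms u)"
proof (induction A arbitrary: A')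
  case (Par P Q)
  from pr_Par_inv[OF Par.prems] show ?case
  proof (elim disjE exE conjE)
    fix P' Q' assume a: "A' = Par P' Q'" "pr P P'" "pr Q Q'"
    from Par.IH(1)[OF a(2)] Par.IH(2)[OF a(3)] obtain O1 O2 where
      "rel_mset dr (atoms P) O1" "atoms P' = (\<Sum>u\<in>#O1. oatoms u)"
      "rel_mset dr (atoms Q) O2" "atoms Q' = (\<Sum>u\<in>#O2. oatoms u)" by blast
    then show ?thesis using a by (intro exI[of _ "O1 + O2"]) (auto intro: rm_plus)
  next
    assume a: "Q = PNil" "pr P A'"
    from Par.IH(1)[OF a(2)] obtain O1 where
      r1: "rel_mset dr (atoms P) O1" and e: "atoms A' = (\<Sum>u\<in>#O1. oatoms u)" by blast
    have r2: "rel_mset dr (atoms Q) {#None#}" using a by (simp add: atoms_nonpar rm_single dr_def)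
    have "rel_mset dr (atoms P + atoms Q) (O1 + {#None#})" using rm_plus[OF r1 r2] .
    moreover have "atoms A' = (\<Sum>u\<in>#O1 + {#None#}. oatoms u)" using e by simp
    ultimately have "rel_mset dr (atoms P + atoms Q) (O1 + {#None#})" "atoms A' = (\<Sum>u\<in>#O1 + {#None#}. oatoms u)"
      by auto
    then show ?thesis by (metis atoms_Par)
  next
    assume a: "P = PNil" "pr Q A'"
    from Par.IH(2)[OF a(2)] obtain O2 where
      r1: "rel_mset dr (atoms Q) O2" and e: "atoms A' = (\<Sum>u\<in>#O2. oatoms u)" by blast
    have r2: "rel_mset dr (atoms P) {#None#}" using a by (simp add: atoms_nonpar rm_single dr_def)
    have "rel_mset dr (atoms P + atoms Q) ({#None#} + O2)" using rm_plus[OF r2 r1] .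
    moreover have "atoms A' = (\<Sum>u\<in>#{#None#} + O2. oatoms u)" using e by simp
    ultimately have "rel_mset dr (atoms P + atoms Q) ({#None#} + O2)" "atoms A' = (\<Sum>u\<in>#{#None#} + O2. oatoms u)"
      by auto
    then show ?thesis by (metis atoms_Par)
  qed
qed (auto simp: atoms_nonpar rm_single dr_def intro!: exI[of _ "{#Some _#}"])

lemma allnil: "(\<forall>a\<in>#atoms P. a = PNil) \<Longrightarrow> pr\<^sup>*\<^sup>* P PNil"
proof (induction P)
  case (Par P1 P2)
  then have "pr\<^sup>*\<^sup>* (Par P1 P2) (Par PNil PNil)" by (simp add: prs_par)
  moreover have "pr (Par PNil PNil) PNil" by (rule pr_nilR) (rule pr_nil)
  ultimately show ?case by simp
qed (auto simp: atoms_nonpar)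

lemma construct: "rel_mset tr (atoms B) OB \<Longrightarrow> (\<Sum>u\<in>#OB. oatoms u) \<noteq> {#} \<Longrightarrow>
   \<exists>B'. pr\<^sup>*\<^sup>* B B' \<and> atoms B' = (\<Sum>u\<in>#OB. oatoms u)"
proof (induction B arbitrary: OB)
  case (Par P Q)
  from rm_split[of tr "atoms P" "atoms Q" OB] Par.prems(1) obtain O1 O2 where
    u: "OB = O1 + O2" "rel_mset tr (atoms P) O1" "rel_mset tr (atoms Q) O2" by auto
  have nil: "\<forall>a\<in>#atoms X. a = PNil" if "rel_mset tr (atoms X) Os" "(\<Sum>u\<in>#Os. oatoms u) = {#}" for X Os
  proof
    fix a assume "a \<in># atoms X"
    from rm_mem[OF that(1) this] obtain ob where ob: "ob \<in># Os" "tr a ob" by blast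
    show "a = PNil"
    proof (cases ob)
      case None then show ?thesis using ob by (simp add: tr_def)
    next
      case (Some b')
      obtain Os' where "Os = add_mset ob Os'" using multi_member_split[OF ob(1)] by blast
      then have "oatoms ob = {#}" using that(2) by simp
      then show ?thesis using Some by simp
    qed
  qed
  show ?case
  proof (cases "(\<Sum>u\<in>#O1. oatoms u) = {#}")
    case True
    then have n2: "(\<Sum>u\<in>#O2. oatoms u) \<noteq> {#}" using Par.prems(2) u(1) by simp
    from Par.IH(2)[OF u(3) n2] obtain Q' where q: "pr\<^sup>*\<^sup>* Q Q'" "atoms Q' = (\<Sum>u\<in>#O2. oatoms u)" by blast
    have "pr\<^sup>*\<^sup>* P PNil" by (rule allnil) (rule nil[OF u(2) True])
    then have "pr\<^sup>*\<^sup>* (Par P Q) (Par PNil Q')" using q(1) by (simp add: prs_par)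
    moreover have "pr (Par PNil Q') Q'" by (rule pr_nilL) simp
    ultimately show ?thesis using q(2) u(1) True by (intro exI[of _ Q']) auto
  next
    case n1: False
    show ?thesis
    proof (cases "(\<Sum>u\<in>#O2. oatoms u) = {#}")
      case True
      from Par.IH(1)[OF u(2) n1] obtain P' where p: "pr\<^sup>*\<^sup>* P P'" "atoms P' = (\<Sum>u\<in>#O1. oatoms u)" by blast
      have "pr\<^sup>*\<^sup>* Q PNil" by (rule allnil) (rule nil[OF u(3) True])
      then have "pr\<^sup>*\<^sup>* (Par P Q) (Par P' PNil)" using p(1) by (simp add: prs_par)
      moreover have "pr (Par P' PNil) P'" by (rule pr_nilR) simp
      ultimately show ?thesis using p(2) u(1) True by (intro exI[of _ P']) auto
    next
      case n2: False
      from Par.IH(1)[OF u(2) n1] obtain P' where p: "pr\<^sup>*\<^sup>* P P'" "atoms P' = (\<Sum>u\<in>#O1. oatoms u)" by blast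
      from Par.IH(2)[OF u(3) n2] obtain Q' where q: "pr\<^sup>*\<^sup>* Q Q'" "atoms Q' = (\<Sum>u\<in>#O2. oatoms u)" by blast
      show ?thesis using p q u(1) by (intro exI[of _ "Par P' Q'"]) (auto simp: prs_par)
    qed
  qed
qed (auto simp: atoms_nonpar rm_single tr_def)

lemma tile: "acr A B \<Longrightarrow> pr A A' \<Longrightarrow> \<exists>B'. pr\<^sup>*\<^sup>* B B' \<and> acr A' B'"
proof (induction A arbitrary: B A' rule: measure_induct_rule[of size])
  case (less A)
  note IH = less.IH
  show ?case
  proof (cases "is_par A")
    case True
    have rAB: "rel_mset acr (atoms A) (atoms B)" using acr_atoms[OF less.prems(1)] .
    from decomp[OF less.prems(2)] obtain Os where
      d: "rel_mset dr (atoms A) Os" and eA: "atoms A' = (\<Sum>u\<in>#Os. oatoms u)" by blast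
    have d': "rel_mset (\<lambda>a u. dr a u \<and> a \<in># atoms A) (atoms A) Os"
      by (rule rm_mono[OF d]) auto
    have "rel_mset (conversep acr) (atoms B) (atoms A)"
      using rAB multiset.rel_flip[of acr "atoms B" "atoms A"] by simp
    then have "(rel_mset (conversep acr) OO rel_mset (\<lambda>a u. dr a u \<and> a \<in># atoms A)) (atoms B) Os"
      using d' by (rule relcomppI)
    then have S: "rel_mset (conversep acr OO (\<lambda>a u. dr a u \<and> a \<in># atoms A)) (atoms B) Os"
      by (simp only: multiset.rel_compp)
    let ?U = "\<lambda>u ub. (u = None \<and> ub = None) \<or> (\<exists>a' b'. u = Some a' \<and> ub = Some b' \<and> acr a' b')"
    have step: "\<exists>ub. tr b ub \<and> ?U v ub" if "(conversep acr OO (\<lambda>a u. dr a u \<and> a \<in># atoms A)) b v" for b v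
    proof -
      from that obtain a where a: "acr a b" "dr a v" "a \<in># atoms A" by auto
      show ?thesis
      proof (cases v)
        case None
        then have "a = PNil" using a(2) by (simp add: dr_def)
        then have "b = PNil" using a(1) acr_PNil by blast
        then show ?thesis using None by (intro exI[of _ None]) (simp add: tr_def)
      next
        case (Some a')
        then have "pr a a'" using a(2) by (simp add: dr_def)
        moreover have "size a < size A" using atoms_size_par[OF True a(3)] .
        ultimately obtain b' where "pr\<^sup>*\<^sup>* b b'" "acr a' b'" using IH a(1) by blast
        then show ?thesis using Some by (intro exI[of _ "Some b'"]) (simp add: tr_def)
      qed
    qed
    from rm_choose[of _ "atoms B" Os tr ?U, OF S step] obtain K where K: "rel_mset tr (atoms B) K" "rel_mset ?U Os K" by blast
    have sK: "rel_mset acr (\<Sum>u\<in>#Os. oatoms u) (\<Sum>u\<in>#K. oatoms u)"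
      by (rule rm_sum[OF K(2)]) (auto simp: acr_atoms)
    have "(\<Sum>u\<in>#K. oatoms u) \<noteq> {#}"
    proof
      assume "(\<Sum>u\<in>#K. oatoms u) = {#}"
      then have "size (\<Sum>u\<in>#Os. oatoms u) = 0" using rel_mset_size[OF sK] by simp
      then show False using eA atoms_ne[of A'] by simp
    qed
    from construct[OF K(1) this] obtain B' where B': "pr\<^sup>*\<^sup>* B B'" "atoms B' = (\<Sum>u\<in>#K. oatoms u)" by blast
    have "acr A' B'" by (rule atoms_acr) (use sK eA B'(2) in simp)
    then show ?thesis using B'(1) by blast
  next
    case False
    from less.prems(2) show ?thesis
    proof (cases rule: pr.cases)
      case pr_nil then show ?thesis using less.prems(1) by auto
    next
      case (pr_var i) then show ?thesis using less.prems(1) by auto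
    next
      case (pr_inp P P' m T)
      from acr_Inp[OF less.prems(1)[unfolded pr_inp(1)]] obtain P2 where p: "B = Inp m T P2" "acr P P2" by blast
      from IH[of P] p(2) pr_inp obtain P2' where "pr\<^sup>*\<^sup>* P2 P2'" "acr P' P2'" by auto
      then show ?thesis using p pr_inp by (auto intro: prs_inp acr.ac_inp)
    next
      case (pr_out P P' m)
      from acr_Out[OF less.prems(1)[unfolded pr_out(1)]] obtain P2 where p: "B = Out m P2" "acr P P2" by blast
      from IH[of P] p(2) pr_out obtain P2' where "pr\<^sup>*\<^sup>* P2 P2'" "acr P' P2'" by auto
      then show ?thesis using p pr_out by (auto intro: prs_out acr.ac_out)
    next
      case (pr_par P P' Q Q') then show ?thesis using False by simp
    next
      case (pr_absP P P' T)
      from acr_AbsP[OF less.prems(1)[unfolded pr_absP(1)]] obtain P2 where p: "B = AbsP T P2" "acr P P2" by blast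
      from IH[of P] p(2) pr_absP obtain P2' where "pr\<^sup>*\<^sup>* P2 P2'" "acr P' P2'" by auto
      then show ?thesis using p pr_absP by (auto intro: prs_absP acr.ac_absP)
    next
      case (pr_absN P P')
      from acr_AbsN[OF less.prems(1)[unfolded pr_absN(1)]] obtain P2 where p: "B = AbsN P2" "acr P P2" by blast
      from IH[of P] p(2) pr_absN obtain P2' where "pr\<^sup>*\<^sup>* P2 P2'" "acr P' P2'" by auto
      then show ?thesis using p pr_absN by (auto intro: prs_absN acr.ac_absN)
    next
      case (pr_appN P P' m)
      from acr_AppN[OF less.prems(1)[unfolded pr_appN(1)]] obtain P2 where p: "B = AppN P2 m" "acr P P2" by blast
      from IH[of P] p(2) pr_appN obtain P2' where "pr\<^sup>*\<^sup>* P2 P2'" "acr P' P2'" by auto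
      then show ?thesis using p pr_appN by (auto intro: prs_appN acr.ac_appN)
    next
      case (pr_appP P P' Q Q')
      from acr_AppP[OF less.prems(1)[unfolded pr_appP(1)]] obtain P2 Q2 where
        p: "B = AppP P2 Q2" "acr P P2" "acr Q Q2" by blast
      from IH[of P] p(2) pr_appP obtain P2' where "pr\<^sup>*\<^sup>* P2 P2'" "acr P' P2'" by auto
      moreover from IH[of Q] p(3) pr_appP obtain Q2' where "pr\<^sup>*\<^sup>* Q2 Q2'" "acr Q' Q2'" by auto
      ultimately show ?thesis using p pr_appP by (auto intro: prs_appP acr.ac_appP)
    next
      case (pr_beta P P' Q Q' T)
      from acr_AppP[OF less.prems(1)[unfolded pr_beta(1)]] obtain M2 Q2 where
        p: "B = AppP M2 Q2" "acr (AbsP T P) M2" "acr Q Q2" by blast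
      from acr_AbsP[OF p(2)] obtain P2 where p2: "M2 = AbsP T P2" "acr P P2" by blast
      from IH[of P] p2(2) pr_beta obtain P2' where a1: "pr\<^sup>*\<^sup>* P2 P2'" "acr P' P2'" by auto
      from IH[of Q] p(3) pr_beta obtain Q2' where a2: "pr\<^sup>*\<^sup>* Q2 Q2'" "acr Q' Q2'" by auto
      have "pr\<^sup>*\<^sup>* B (AppP (AbsP T P2') Q2')" using p p2 a1 a2 by (simp add: prs_appP prs_absP)
      moreover have "pr (AppP (AbsP T P2') Q2') (psubst (inst Q2') P2')" by (rule pr.pr_beta) simp_all
      moreover have "acr (psubst (inst Q') P') (psubst (inst Q2') P2')"
        by (rule acr_psubst[OF a1(2)]) (auto simp: inst_def a2(2) split: nat.split)
      ultimately show ?thesis using pr_beta by (meson rtranclp.rtrancl_into_rtrancl)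
    next
      case (pr_nbeta P P' m)
      from acr_AppN[OF less.prems(1)[unfolded pr_nbeta(1)]] obtain M2 where
        p: "B = AppN M2 m" "acr (AbsN P) M2" by blast
      from acr_AbsN[OF p(2)] obtain P2 where p2: "M2 = AbsN P2" "acr P P2" by blast
      from IH[of P] p2(2) pr_nbeta obtain P2' where a1: "pr\<^sup>*\<^sup>* P2 P2'" "acr P' P2'" by auto
      have "pr\<^sup>*\<^sup>* B (AppN (AbsN P2') m)" using p p2 a1 by (simp add: prs_appN prs_absN)
      moreover have "pr (AppN (AbsN P2') m) (nsubst (ninst m) P2')" by (rule pr.pr_nbeta) simp
      moreover have "acr (nsubst (ninst m) P') (nsubst (ninst m) P2')" by (rule acr_nsubst[OF a1(2)])
      ultimately show ?thesis using pr_nbeta by (meson rtranclp.rtrancl_into_rtrancl)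
    next
      case (pr_nilR P) then show ?thesis using False by simp
    next
      case (pr_nilL P) then show ?thesis using False by simp
    qed
  qed
qed

lemma tiles: "pr\<^sup>*\<^sup>* A A' \<Longrightarrow> acr A B \<Longrightarrow> \<exists>B'. pr\<^sup>*\<^sup>* B B' \<and> acr A' B'"
proof (induction rule: rtranclp_induct)
  case base then show ?case by blast
next
  case (step A0 A')
  then obtain B0 where "pr\<^sup>*\<^sup>* B B0" "acr A0 B0" by blast
  with tile[OF this(2) step(2)] show ?case by (meson rtranclp_trans)
qed

definition joinable :: "trm \<Rightarrow> trm \<Rightarrow> bool" where
  "joinable P Q \<longleftrightarrow> (\<exists>P' Q'. pr\<^sup>*\<^sup>* P P' \<and> pr\<^sup>*\<^sup>* Q Q' \<and> acr P' Q')"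

lemma pr_step_joinable: "pr P Q \<Longrightarrow> joinable P Q"
  unfolding joinable_def by (meson acr_refl r_into_rtranclp rtranclp.rtrancl_refl)

lemma scong_joinable: "scong P Q \<Longrightarrow> joinable P Q"
proof (induction rule: scong.induct)
  case (sc_refl P) then show ?case unfolding joinable_def by blast
next
  case (sc_sym P Q) then show ?case unfolding joinable_def by (meson acr_sym)
next
  case (sc_trans P Q R)
  from sc_trans.IH obtain P1 Q1 Q2 R2 where
    a: "pr\<^sup>*\<^sup>* P P1" "pr\<^sup>*\<^sup>* Q Q1" "acr P1 Q1" "pr\<^sup>*\<^sup>* Q Q2" "pr\<^sup>*\<^sup>* R R2" "acr Q2 R2"
    unfolding joinable_def by blast
  from pr_CR[OF a(2) a(4)] obtain C where c: "pr\<^sup>*\<^sup>* Q1 C" "pr\<^sup>*\<^sup>* Q2 C" by blast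
  from tiles[OF c(1) acr_sym[OF a(3)]] obtain P3 where p3: "pr\<^sup>*\<^sup>* P1 P3" "acr C P3" by blast
  from tiles[OF c(2) a(6)] obtain R3 where r3: "pr\<^sup>*\<^sup>* R2 R3" "acr C R3" by blast
  have "acr P3 R3" using p3(2) r3(2) by (meson acr_sym acr_trans)
  then show ?case unfolding joinable_def using a(1) a(5) p3(1) r3(1) by (meson rtranclp_trans)
next
  case (sc_inp P P' m T) then show ?case unfolding joinable_def by (meson prs_inp acr.ac_inp)
next
  case (sc_out P P' m) then show ?case unfolding joinable_def by (meson prs_out acr.ac_out)
next
  case (sc_par P P' Q Q') then show ?case unfolding joinable_def by (meson prs_par acr_par_cong)
next
  case (sc_absP P P' T) then show ?case unfolding joinable_def by (meson prs_absP acr.ac_absP)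
next
  case (sc_appP P P' Q Q') then show ?case unfolding joinable_def by (meson prs_appP acr.ac_appP)
next
  case (sc_absN P P') then show ?case unfolding joinable_def by (meson prs_absN acr.ac_absN)
next
  case (sc_appN P P' m) then show ?case unfolding joinable_def by (meson prs_appN acr.ac_appN)
next
  case (sc_assoc P Q R)
  have "acr (Par (Par P Q) R) (Par P (Par Q R))"
    by (rule ac_par) (auto simp: add.assoc intro: rm_refl)
  then show ?case unfolding joinable_def by blast
next
  case (sc_comm P Q)
  have "acr (Par P Q) (Par Q P)"
    by (rule ac_par) (auto simp: add.commute intro: rm_refl)
  then show ?case unfolding joinable_def by blast
next
  case (sc_nil P) then show ?case by (intro pr_step_joinable pr_nilR pr_refl)
next
  case (sc_betaP T P Q) then show ?case by (intro pr_step_joinable pr_beta pr_refl)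
next
  case (sc_betaN P m) then show ?case by (intro pr_step_joinable pr_nbeta pr_refl)
qed

fun parl :: "trm list \<Rightarrow> trm" where
  "parl [] = PNil"
| "parl [x] = x"
| "parl (x#y#ys) = Par x (parl (y#ys))"

lemma parl_cons: "xs \<noteq> [] \<Longrightarrow> parl (x#xs) = Par x (parl xs)" by (cases xs) auto

lemma atomsl_ne: "atomsl X \<noteq> []" by (induction X) auto

lemma parl_app: "xs \<noteq> [] \<Longrightarrow> ys \<noteq> [] \<Longrightarrow> scong (Par (parl xs) (parl ys)) (parl (xs @ ys))"
proof (induction xs)
  case Nil then show ?case by simp
next
  case (Cons x xs)
  show ?case
  proof (cases "xs = []")
    case True then show ?thesis using Cons by (simp add: parl_cons scong.sc_refl)
  next
    case False
    have "scong (Par (Par x (parl xs)) (parl ys)) (Par x (Par (parl xs) (parl ys)))" by (rule sc_assoc)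
    moreover have "scong (Par x (Par (parl xs) (parl ys))) (Par x (parl (xs @ ys)))"
      using Cons False by (auto intro: scong.intros)
    ultimately show ?thesis using False Cons by (simp add: parl_cons) (meson scong.sc_trans)
  qed
qed

lemma scong_parl_atoms: "scong X (parl (atomsl X))"
proof (induction X)
  case (Par P Q)
  have "scong (Par P Q) (Par (parl (atomsl P)) (parl (atomsl Q)))" using Par by (auto intro: scong.intros)
  moreover have "scong (Par (parl (atomsl P)) (parl (atomsl Q))) (parl (atomsl P @ atomsl Q))"
    by (rule parl_app) (auto simp: atomsl_ne)
  ultimately show ?case by (auto intro: scong.sc_trans)
qed (auto intro: scong.intros)

lemma parl_rel: "list_all2 scong xs ys \<Longrightarrow> scong (parl xs) (parl ys)"
proof (induction rule: list_all2_induct)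
  case Nil then show ?case by (simp add: scong.sc_refl)
next
  case (Cons x xs y ys)
  show ?case
  proof (cases "xs = []")
    case True then have "ys = []" using Cons(2) by auto
    then show ?thesis using True Cons by simp
  next
    case False then have "ys \<noteq> []" using Cons(2) list_all2_lengthD by fastforce
    then show ?thesis using False Cons by (simp add: parl_cons scong.sc_par)
  qed
qed

lemma parl_swap: "scong (Par x (parl (y # r))) (Par y (parl (x # r)))"
proof (cases "r = []")
  case True then show ?thesis by (simp add: scong.sc_comm)
next
  case False
  let ?R = "parl r"
  have "scong (Par x (Par y ?R)) (Par (Par x y) ?R)" by (meson scong.sc_assoc scong.sc_sym)
  moreover have "scong (Par (Par x y) ?R) (Par (Par y x) ?R)" by (meson scong.sc_comm scong.sc_par scong.sc_refl)
  moreover have "scong (Par (Par y x) ?R) (Par y (Par x ?R))" by (rule scong.sc_assoc)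
  ultimately show ?thesis using False by (simp add: parl_cons) (meson scong.sc_trans)
qed

lemma parl_move: "scong (parl (x # l1 @ l2)) (parl (l1 @ x # l2))"
proof (induction l1)
  case Nil then show ?case by (simp add: scong.sc_refl)
next
  case (Cons y l1)
  have "parl (x # (y # l1) @ l2) = Par x (parl (y # l1 @ l2))" by simp
  moreover have "scong (Par x (parl (y # l1 @ l2))) (Par y (parl (x # l1 @ l2)))" by (rule parl_swap)
  moreover have "scong (Par y (parl (x # l1 @ l2))) (Par y (parl (l1 @ x # l2)))"
    using Cons by (meson scong.sc_par scong.sc_refl)
  moreover have "parl ((y # l1) @ x # l2) = Par y (parl (l1 @ x # l2))" by (simp add: parl_cons)
  ultimately show ?case by (metis scong.sc_trans)
qed

lemma parl_perm: "mset xs = mset ys \<Longrightarrow> scong (parl xs) (parl ys)"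
proof (induction xs arbitrary: ys)
  case Nil then show ?case by (simp add: scong.sc_refl)
next
  case (Cons x xs)
  then have "x \<in> set ys" by (metis list.set_intros(1) set_mset_mset)
  then obtain l1 l2 where ys: "ys = l1 @ x # l2" by (meson split_list)
  then have m: "mset xs = mset (l1 @ l2)" using Cons.prems by simp
  have "scong (parl (x # xs)) (parl (x # l1 @ l2))"
  proof (cases "xs = []")
    case True then show ?thesis using m by (simp add: scong.sc_refl)
  next
    case False
    then have "l1 @ l2 \<noteq> []" using m by auto
    then show ?thesis using False Cons.IH[OF m] by (simp add: parl_cons scong.sc_par scong.sc_refl)
  qed
  then show ?case using ys parl_move by (metis scong.sc_trans)
qed

lemma acr_scong: "acr A B \<Longrightarrow> scong A B"
proof (induction rule: acr.induct)
  case (ac_par A B)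
  have "rel_mset scong (atoms A) (atoms B)" by (rule rm_mono[OF ac_par(3)]) auto
  then obtain xs ys where l: "mset xs = atoms A" "mset ys = atoms B" "list_all2 scong xs ys"
    unfolding rel_mset_def by blast
  have "scong A (parl (atomsl A))" by (rule scong_parl_atoms)
  moreover have "scong (parl (atomsl A)) (parl xs)" by (rule parl_perm) (use l in \<open>simp add: atoms_def\<close>)
  moreover have "scong (parl xs) (parl ys)" by (rule parl_rel[OF l(3)])
  moreover have "scong (parl ys) (parl (atomsl B))" by (rule parl_perm) (use l in \<open>simp add: atoms_def\<close>)
  moreover have "scong (parl (atomsl B)) B" by (rule scong.sc_sym, rule scong_parl_atoms)
  ultimately show ?case by (meson scong.sc_trans)
qed (auto intro: scong.intros)

lemma joinable_scong: "joinable P Q \<Longrightarrow> scong P Q"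
  unfolding joinable_def by (meson acr_scong prs_scong scong.sc_sym scong.sc_trans)

lemma inj_Inp: "scong (Inp m T P) (Inp m' T' Q) \<Longrightarrow> m = m' \<and> T = T' \<and> scong P Q"
proof -
  assume "scong (Inp m T P) (Inp m' T' Q)"
  then obtain X Y where j: "pr\<^sup>*\<^sup>* (Inp m T P) X" "pr\<^sup>*\<^sup>* (Inp m' T' Q) Y" "acr X Y"
    using scong_joinable joinable_def by blast
  from prs_Inp_inv[OF j(1)] obtain P' where p: "X = Inp m T P'" "pr\<^sup>*\<^sup>* P P'" by blast
  from prs_Inp_inv[OF j(2)] obtain Q' where q: "Y = Inp m' T' Q'" "pr\<^sup>*\<^sup>* Q Q'" by blast
  from acr_Inp[OF j(3)[unfolded p(1)]] q(1) have "m = m'" "T = T'" "acr P' Q'" by auto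
  then show ?thesis using p(2) q(2) by (meson acr_scong prs_scong scong.sc_sym scong.sc_trans)
qed

lemma Inp_not_PNil: "\<not> scong (Inp m T P) PNil"
proof
  assume "scong (Inp m T P) PNil"
  then obtain X Y where j: "pr\<^sup>*\<^sup>* (Inp m T P) X" "pr\<^sup>*\<^sup>* PNil Y" "acr X Y"
    using scong_joinable joinable_def by blast
  from prs_Inp_inv[OF j(1)] prs_PNil_inv[OF j(2)] j(3) show False by (auto dest: acr_PNil')
qed

lemma Out_not_PNil: "\<not> scong (Out m P) PNil"
proof
  assume "scong (Out m P) PNil"
  then obtain X Y where j: "pr\<^sup>*\<^sup>* (Out m P) X" "pr\<^sup>*\<^sup>* PNil Y" "acr X Y"
    using scong_joinable joinable_def by blast
  from prs_Out_inv[OF j(1)] prs_PNil_inv[OF j(2)] j(3) show False by (auto dest: acr_PNil')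
qed

lemma Out_not_Inp: "\<not> scong (Out m P) (Inp m' T Q)"
proof
  assume "scong (Out m P) (Inp m' T Q)"
  then obtain X Y where j: "pr\<^sup>*\<^sup>* (Out m P) X" "pr\<^sup>*\<^sup>* (Inp m' T Q) Y" "acr X Y"
    using scong_joinable joinable_def by blast
  from prs_Out_inv[OF j(1)] prs_Inp_inv[OF j(2)] j(3) show False by (auto dest: acr_Out)
qed

lemma Inp_not_AbsP: "\<not> scong (Inp m T P) (AbsP T' Q)"
proof
  assume "scong (Inp m T P) (AbsP T' Q)"
  then obtain X Y where j: "pr\<^sup>*\<^sup>* (Inp m T P) X" "pr\<^sup>*\<^sup>* (AbsP T' Q) Y" "acr X Y"
    using scong_joinable joinable_def by blast
  from prs_Inp_inv[OF j(1)] prs_AbsP_inv[OF j(2)] j(3) show False by (auto dest: acr_Inp)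
qed

lemma Inp_not_AbsN: "\<not> scong (Inp m T P) (AbsN Q)"
proof
  assume "scong (Inp m T P) (AbsN Q)"
  then obtain X Y where j: "pr\<^sup>*\<^sup>* (Inp m T P) X" "pr\<^sup>*\<^sup>* (AbsN Q) Y" "acr X Y"
    using scong_joinable joinable_def by blast
  from prs_Inp_inv[OF j(1)] prs_AbsN_inv[OF j(2)] j(3) show False by (auto dest: acr_Inp)
qed

lemma Par_inv: "scong (Par P Q) Z \<Longrightarrow> (\<And>Y. pr\<^sup>*\<^sup>* Z Y \<Longrightarrow> \<not> is_par Y) \<Longrightarrow>
   (scong P PNil \<and> scong Q Z) \<or> (scong Q PNil \<and> scong P Z)"
proof -
  assume a: "scong (Par P Q) Z" "\<And>Y. pr\<^sup>*\<^sup>* Z Y \<Longrightarrow> \<not> is_par Y"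
  then obtain X Y where j: "pr\<^sup>*\<^sup>* (Par P Q) X" "pr\<^sup>*\<^sup>* Z Y" "acr X Y"
    using scong_joinable joinable_def by blast
  have "\<not> is_par X" using a(2)[OF j(2)] acr_is_par[OF j(3)] by simp
  moreover have sXZ: "scong X Z" using j by (meson acr_scong prs_scong scong.sc_sym scong.sc_trans)
  ultimately show ?thesis using prs_Par_inv[OF j(1)]
    by (auto dest: prs_scong intro: scong.sc_trans)
qed

lemma PNil_stable: "pr\<^sup>*\<^sup>* PNil Y \<Longrightarrow> \<not> is_par Y" by (auto dest: prs_PNil_inv)
lemma Inp_stable: "pr\<^sup>*\<^sup>* (Inp m T Q) Y \<Longrightarrow> \<not> is_par Y" by (auto dest: prs_Inp_inv)

lemma trans_inv: "trans X l X' \<Longrightarrow> \<not> scong X PNil \<and>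
   (\<forall>m T Q. scong X (Inp m T Q) \<longrightarrow> l = LInp m T \<and> scong X' Q)"
proof (induction rule: trans.induct)
  case (tr_inp m T P)
  then show ?case using Inp_not_PNil inj_Inp by blast
next
  case (tr_out m Q)
  then show ?case using Out_not_PNil Out_not_Inp by blast
next
  case (tr_parL P l P' Q)
  have n: "\<not> scong (Par P Q) PNil"
    using Par_inv[of P Q PNil] PNil_stable tr_parL.IH by blast
  moreover have "l = LInp m T \<and> scong (Par P' (lift_lab l Q)) R" if s: "scong (Par P Q) (Inp m T R)" for m T R
  proof -
    from Par_inv[OF s Inp_stable[of m T R]] tr_parL.IH have q: "scong Q PNil" and p: "scong P (Inp m T R)" by blast+
    from tr_parL.IH p have l: "l = LInp m T" and p': "scong P' R" by blast+
    have "scong (lift_lab l Q) PNil" using l scong_renP[OF q, of Suc] by simp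
    then have "scong (Par P' (lift_lab l Q)) (Par R PNil)" using p' by (simp add: scong.sc_par)
    then show ?thesis using l by (meson scong.sc_nil scong.sc_trans)
  qed
  ultimately show ?case by blast
next
  case (tr_parR P l P' Q)
  have n: "\<not> scong (Par Q P) PNil"
    using Par_inv[of Q P PNil] PNil_stable tr_parR.IH by blast
  moreover have "l = LInp m T \<and> scong (Par (lift_lab l Q) P') R" if s: "scong (Par Q P) (Inp m T R)" for m T R
  proof -
    from Par_inv[OF s Inp_stable[of m T R]] tr_parR.IH have q: "scong Q PNil" and p: "scong P (Inp m T R)" by blast+
    from tr_parR.IH p have l: "l = LInp m T" and p': "scong P' R" by blast+
    have "scong (lift_lab l Q) PNil" using l scong_renP[OF q, of Suc] by simp
    then have "scong (Par (lift_lab l Q) P') (Par PNil R)" using p' by (simp add: scong.sc_par)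
    then show ?thesis using l by (meson scong.sc_comm scong.sc_nil scong.sc_trans)
  qed
  ultimately show ?case by blast
next
  case (tr_commL P m A P' Q T Q')
  have "\<not> scong (Par P Q) PNil" using Par_inv[of P Q PNil] PNil_stable tr_commL.IH by blast
  moreover have "\<not> scong (Par P Q) (Inp m' T' R)" for m' T' R
    using Par_inv[of P Q "Inp m' T' R", OF _ Inp_stable[of m' T' R]] tr_commL.IH by blast
  ultimately show ?case by blast
next
  case (tr_commR P m A P' Q T Q')
  have "\<not> scong (Par Q P) PNil" using Par_inv[of Q P PNil] PNil_stable tr_commR.IH by blast
  moreover have "\<not> scong (Par Q P) (Inp m' T' R)" for m' T' R
    using Par_inv[of Q P "Inp m' T' R", OF _ Inp_stable[of m' T' R]] tr_commR.IH by blast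
  ultimately show ?case by blast
next
  case (tr_cong P P1 l P1' P')
  then show ?case by (meson scong.sc_sym scong.sc_trans)
qed

definition bis_step :: "(trm \<Rightarrow> trm \<Rightarrow> bool) \<Rightarrow> trm \<Rightarrow> trm \<Rightarrow> bool" where
  "bis_step R P Q \<longleftrightarrow>
       closedT P \<and> closedT Q \<and>
       (\<not> is_abs P \<longrightarrow> \<not> is_abs Q) \<and>
       (\<forall>T U P'. scong P (AbsP T P') \<and> typing [T] P' U \<longrightarrow>
          (\<exists>Q'. scong Q (AbsP T Q') \<and>
             (\<forall>A. typing [] A T \<longrightarrow> R (psubst (inst A) P') (psubst (inst A) Q')))) \<and>
       (\<forall>U A. scong P (AbsN A) \<and> typing [] A U \<longrightarrow>
          (\<exists>B. scong Q (AbsN B) \<and> R A B)) \<and>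
       (\<forall>a A P'. trans P (LOut (NC a) A) P' \<longrightarrow>
          (\<exists>B Q'. trans Q (LOut (NC a) B) Q' \<and> R A B \<and> R P' Q')) \<and>
       (\<forall>a T P'. trans P (LInp (NC a) T) P' \<longrightarrow>
          (\<exists>Q'. trans Q (LInp (NC a) T) Q' \<and>
             (\<forall>A. typing [] A T \<longrightarrow> R (psubst (inst A) P') (psubst (inst A) Q')))) \<and>
       (\<forall>P'. trans P LTau P' \<longrightarrow> (\<exists>Q'. trans Q LTau Q' \<and> R P' Q'))"

lemma ho_bisim_iff: "ho_bisim R \<longleftrightarrow> (\<forall>P Q. R P Q \<longrightarrow> R Q P) \<and> (\<forall>P Q. R P Q \<longrightarrow> bis_step R P Q)"
  unfolding ho_bisim_def bis_step_def by blast

lemma bis_step_mono: "bis_step R P Q \<Longrightarrow> (\<And>x y. R x y \<Longrightarrow> R' x y) \<Longrightarrow> bis_step R' P Q"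
  unfolding bis_step_def by meson

lemma ho_sim_step: "ho_sim P Q \<Longrightarrow> bis_step ho_sim P Q"
proof -
  assume "ho_sim P Q"
  then obtain R where R: "ho_bisim R" "R P Q" unfolding ho_sim_def by blast
  then have "bis_step R P Q" unfolding ho_bisim_iff by blast
  then show ?thesis by (rule bis_step_mono) (use R(1) in \<open>auto simp: ho_sim_def\<close>)
qed

lemma ho_sim_sym: "ho_sim P Q \<Longrightarrow> ho_sim Q P"
  unfolding ho_sim_def ho_bisim_def by blast

lemma ho_sim_closed: "ho_sim P Q \<Longrightarrow> closedT P \<and> closedT Q"
  using ho_sim_step bis_step_def by blast

lemma is_abs_scong: "scong X Y \<Longrightarrow> is_abs Y \<Longrightarrow> is_abs X"
  unfolding is_abs_def by (meson scong.sc_trans)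

lemma Inp_not_abs: "scong X (Inp m T Q) \<Longrightarrow> \<not> is_abs X"
  unfolding is_abs_def by (meson Inp_not_AbsN Inp_not_AbsP scong.sc_sym scong.sc_trans)

definition Rc :: "trm \<Rightarrow> trm \<Rightarrow> bool" where
  "Rc X Y \<longleftrightarrow> closedT X \<and> closedT Y \<and> (\<exists>X0 Y0. scong X X0 \<and> ho_sim X0 Y0 \<and> scong Y0 Y)"

definition Rp :: "trm \<Rightarrow> trm \<Rightarrow> bool" where
  "Rp X Y \<longleftrightarrow> closedT X \<and> closedT Y \<and> (\<exists>m T Pb Qb. scong X (Inp m T Pb) \<and> scong Y (Inp m T Qb) \<and>
      typing [T] Pb Pr \<and> typing [T] Qb Pr \<and>
      (\<forall>A. typing [] A T \<longrightarrow> ho_sim (psubst (inst A) Pb) (psubst (inst A) Qb)))"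

definition RR :: "trm \<Rightarrow> trm \<Rightarrow> bool" where "RR X Y \<longleftrightarrow> Rc X Y \<or> Rp X Y"

lemma ho_sim_RR: "ho_sim A B \<Longrightarrow> RR A B"
  unfolding RR_def Rc_def using ho_sim_closed scong.sc_refl by blast

lemma typing_closedT: "typing [] A T \<Longrightarrow> closedT A" unfolding closedT_def by blast

lemma Rc_step: "Rc X Y \<Longrightarrow> bis_step RR X Y"
proof -
  assume "Rc X Y"
  then obtain X0 Y0 where c: "closedT X" "closedT Y" and s: "scong X X0" "ho_sim X0 Y0" "scong Y0 Y"
    unfolding Rc_def by blast
  have B0: "bis_step ho_sim X0 Y0" using ho_sim_step[OF s(2)] .
  have cl0: "closedT X0" "closedT Y0" using ho_sim_closed[OF s(2)] by auto
  have sX0: "scong X0 X" using s(1) by (rule scong.sc_sym)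
  have sY: "scong Y Y0" using s(3) by (rule scong.sc_sym)
  show ?thesis unfolding bis_step_def
  proof (intro conjI allI impI)
    show "closedT X" "closedT Y" by fact+
  next
    assume "\<not> is_abs X"
    then have "\<not> is_abs X0" using is_abs_scong[OF s(1)] by blast
    then have "\<not> is_abs Y0" using B0 unfolding bis_step_def by blast
    then show "\<not> is_abs Y" using is_abs_scong[OF s(3)] by blast
  next
    fix T U P' assume a: "scong X (AbsP T P') \<and> typing [T] P' U"
    then have "scong X0 (AbsP T P')" using sX0 by (meson scong.sc_trans)
    with a B0 obtain Q' where q: "scong Y0 (AbsP T Q')"
      "\<forall>A. typing [] A T \<longrightarrow> ho_sim (psubst (inst A) P') (psubst (inst A) Q')"
      unfolding bis_step_def by blast
    then show "\<exists>Q'. scong Y (AbsP T Q') \<and> (\<forall>A. typing [] A T \<longrightarrow> RR (psubst (inst A) P') (psubst (inst A) Q'))"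
      using sY by (meson ho_sim_RR scong.sc_trans)
  next
    fix U A assume a: "scong X (AbsN A) \<and> typing [] A U"
    then have "scong X0 (AbsN A)" using sX0 by (meson scong.sc_trans)
    with a B0 obtain B where q: "scong Y0 (AbsN B)" "ho_sim A B"
      unfolding bis_step_def by blast
    then show "\<exists>B. scong Y (AbsN B) \<and> RR A B" using sY by (meson ho_sim_RR scong.sc_trans)
  next
    fix a A P' assume "trans X (LOut (NC a) A) P'"
    then have "trans X0 (LOut (NC a) A) P'" using trans_transfer[OF sX0 c(1)] by blast
    with B0 obtain B Q' where q: "trans Y0 (LOut (NC a) B) Q'" "ho_sim A B" "ho_sim P' Q'"
      unfolding bis_step_def by blast
    have "trans Y (LOut (NC a) B) Q'" using trans_transfer[OF sY cl0(2) q(1)] .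
    then show "\<exists>B Q'. trans Y (LOut (NC a) B) Q' \<and> RR A B \<and> RR P' Q'" using q ho_sim_RR by blast
  next
    fix a T P' assume "trans X (LInp (NC a) T) P'"
    then have "trans X0 (LInp (NC a) T) P'" using trans_transfer[OF sX0 c(1)] by blast
    with B0 obtain Q' where q: "trans Y0 (LInp (NC a) T) Q'"
      "\<forall>A. typing [] A T \<longrightarrow> ho_sim (psubst (inst A) P') (psubst (inst A) Q')"
      unfolding bis_step_def by blast
    have "trans Y (LInp (NC a) T) Q'" using trans_transfer[OF sY cl0(2) q(1)] .
    then show "\<exists>Q'. trans Y (LInp (NC a) T) Q' \<and> (\<forall>A. typing [] A T \<longrightarrow> RR (psubst (inst A) P') (psubst (inst A) Q'))"
      using q ho_sim_RR by blast
  next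
    fix P' assume "trans X LTau P'"
    then have "trans X0 LTau P'" using trans_transfer[OF sX0 c(1)] by blast
    with B0 obtain Q' where q: "trans Y0 LTau Q'" "ho_sim P' Q'"
      unfolding bis_step_def by blast
    have "trans Y LTau Q'" using trans_transfer[OF sY cl0(2) q(1)] .
    then show "\<exists>Q'. trans Y LTau Q' \<and> RR P' Q'" using q ho_sim_RR by blast
  qed
qed

lemma Rp_step: "Rp X Y \<Longrightarrow> bis_step RR X Y"
proof -
  assume "Rp X Y"
  then obtain m T Pb Qb where c: "closedT X" "closedT Y" and
    s: "scong X (Inp m T Pb)" "scong Y (Inp m T Qb)" "typing [T] Pb Pr" "typing [T] Qb Pr"
    "\<forall>A. typing [] A T \<longrightarrow> ho_sim (psubst (inst A) Pb) (psubst (inst A) Qb)"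
    unfolding Rp_def by blast
  from c(1) obtain TX where TX: "typing [] X TX" unfolding closedT_def by blast
  show ?thesis unfolding bis_step_def
  proof (intro conjI allI impI)
    show "closedT X" "closedT Y" by fact+
  next
    show "\<not> is_abs Y" using Inp_not_abs[OF s(2)] .
  next
    fix T' U P' assume a: "scong X (AbsP T' P') \<and> typing [T'] P' U"
    then have False using s(1) Inp_not_AbsP by (meson scong.sc_sym scong.sc_trans)
    then show "\<exists>Q'. scong Y (AbsP T' Q') \<and> (\<forall>A. typing [] A T' \<longrightarrow> RR (psubst (inst A) P') (psubst (inst A) Q'))" ..
  next
    fix U A assume a: "scong X (AbsN A) \<and> typing [] A U"
    then have False using s(1) Inp_not_AbsN by (meson scong.sc_sym scong.sc_trans)
    then show "\<exists>B. scong Y (AbsN B) \<and> RR A B" ..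
  next
    fix a A P' assume "trans X (LOut (NC a) A) P'"
    then have False using trans_inv s(1) by blast
    then show "\<exists>B Q'. trans Y (LOut (NC a) B) Q' \<and> RR A B \<and> RR P' Q'" ..
  next
    fix a T' P' assume tX: "trans X (LInp (NC a) T') P'"
    from trans_inv[OF tX] s(1) have "LInp (NC a) T' = LInp m T \<and> scong P' Pb" by blast
    then have e: "NC a = m" "T' = T" and sP: "scong P' Pb" by auto
    have tP': "typing [T] P' Pr" using trans_subject[OF tX TX] e by simp
    have "trans Y (LInp m T) Qb"
    proof (rule tr_cong)
      show "scong Y (Inp m T Qb)" by fact
      show "typing [] (Inp m T Qb) Pr" using s(4) by (rule t_inp)
      show "trans (Inp m T Qb) (LInp m T) Qb" by (rule tr_inp)
      show "scong Qb Qb" by (rule sc_refl)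
      show "typing (labctx (LInp m T)) Qb Pr" using s(4) by simp
    qed
    moreover have "RR (psubst (inst A) P') (psubst (inst A) Qb)" if A: "typing [] A T" for A
    proof -
      have "Rc (psubst (inst A) P') (psubst (inst A) Qb)" unfolding Rc_def
      proof (intro conjI exI)
        show "closedT (psubst (inst A) P')" using typing_inst[OF tP' A] typing_closedT by blast
        show "closedT (psubst (inst A) Qb)" using typing_inst[OF s(4) A] typing_closedT by blast
        show "scong (psubst (inst A) P') (psubst (inst A) Pb)" using scong_psubst[OF sP] .
        show "ho_sim (psubst (inst A) Pb) (psubst (inst A) Qb)" using s(5) A by blast
        show "scong (psubst (inst A) Qb) (psubst (inst A) Qb)" by (rule sc_refl)
      qed
      then show ?thesis unfolding RR_def by blast
    qed
    ultimately show "\<exists>Q'. trans Y (LInp (NC a) T') Q' \<and> (\<forall>A. typing [] A T' \<longrightarrow> RR (psubst (inst A) P') (psubst (inst A) Q'))"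
      using e by blast
  next
    fix P' assume "trans X LTau P'"
    then have False using trans_inv s(1) by blast
    then show "\<exists>Q'. trans Y LTau Q' \<and> RR P' Q'" ..
  qed
qed

lemma RR_bisim: "ho_bisim RR"
  unfolding ho_bisim_iff
proof (intro conjI allI impI)
  fix P Q assume "RR P Q"
  then show "RR Q P" unfolding RR_def Rc_def Rp_def
    by (elim disjE conjE exE) (meson ho_sim_sym scong.sc_sym)+
next
  fix P Q assume "RR P Q"
  then have "Rc P Q \<or> Rp P Q" by (simp add: RR_def)
  then show "bis_step RR P Q" using Rc_step Rp_step by blast
qed

lemma sim_scong: "ho_sim X0 Y0 \<Longrightarrow> scong X X0 \<Longrightarrow> scong Y0 Y \<Longrightarrow> closedT X \<Longrightarrow> closedT Y \<Longrightarrow> ho_sim X Y"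
proof -
  assume a: "ho_sim X0 Y0" "scong X X0" "scong Y0 Y" "closedT X" "closedT Y"
  then have "Rc X Y" unfolding Rc_def by blast
  then have "RR X Y" by (simp add: RR_def)
  then show ?thesis unfolding ho_sim_def using RR_bisim by blast
qed

lemma prefix_intro: "typing [T] Pb Pr \<Longrightarrow> typing [T] Qb Pr \<Longrightarrow>
   (\<forall>A. typing [] A T \<longrightarrow> ho_sim (psubst (inst A) Pb) (psubst (inst A) Qb)) \<Longrightarrow>
   ho_sim (Inp m T Pb) (Inp m T Qb)"
proof -
  assume a: "typing [T] Pb Pr" "typing [T] Qb Pr"
    "\<forall>A. typing [] A T \<longrightarrow> ho_sim (psubst (inst A) Pb) (psubst (inst A) Qb)"
  have "Rp (Inp m T Pb) (Inp m T Qb)" unfolding Rp_def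
    using a by (meson sc_refl t_inp typing_closedT)
  then show ?thesis unfolding ho_sim_def using RR_bisim RR_def by blast
qed

lemma prefix_elim: "ho_sim (Inp (NC h) T Pb) (Inp (NC h) T Qb) \<Longrightarrow> typing [T] Pb Pr \<Longrightarrow> typing [T] Qb Pr \<Longrightarrow>
   typing [] A T \<Longrightarrow> ho_sim (psubst (inst A) Pb) (psubst (inst A) Qb)"
proof -
  assume a: "ho_sim (Inp (NC h) T Pb) (Inp (NC h) T Qb)" "typing [T] Pb Pr" "typing [T] Qb Pr" "typing [] A T"
  have "trans (Inp (NC h) T Pb) (LInp (NC h) T) Pb" by (rule tr_inp)
  with ho_sim_step[OF a(1)] obtain Q' where q: "trans (Inp (NC h) T Qb) (LInp (NC h) T) Q'"
    "\<forall>A. typing [] A T \<longrightarrow> ho_sim (psubst (inst A) Pb) (psubst (inst A) Q')"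
    unfolding bis_step_def by blast
  have "scong Q' Qb" using trans_inv[OF q(1)] sc_refl by blast
  then have "scong (psubst (inst A) Q') (psubst (inst A) Qb)" by (rule scong_psubst)
  moreover have "ho_sim (psubst (inst A) Pb) (psubst (inst A) Q')" using q(2) a(4) by blast
  ultimately show ?thesis using sim_scong sc_refl typing_inst a typing_closedT by meson
qed

lemma hpref_snoc: "hpref h (G @ [T]) P = Inp (NC h) T (hpref h G P)"
  by (induction G arbitrary: P) auto

lemma typing_hpref: "typing (G @ G2) X Pr \<Longrightarrow> typing G2 (hpref h G X) Pr"
  by (induction G arbitrary: X) (auto intro: t_inp)

fun uppn :: "nat \<Rightarrow> (nat \<Rightarrow> trm) \<Rightarrow> nat \<Rightarrow> trm" where
  "uppn 0 s = s"
| "uppn (Suc k) s = upp (uppn k s)"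

lemma psubst_hpref: "psubst s (hpref h G X) = hpref h G (psubst (uppn (length G) s) X)"
  by (induction G arbitrary: X) auto

lemma uppn_formula: "uppn k s i = (if i < k then PVar i else renP (\<lambda>j. j + k) (s (i - k)))"
proof (induction k arbitrary: i)
  case 0 then show ?case by (simp add: renP_psubst_PVar psubst_PVar')
next
  case (Suc k)
  show ?case
  proof (cases i)
    case 0 then show ?thesis by (simp add: upp_def)
  next
    case (Suc j)
    have "(Suc \<circ> (\<lambda>j. j + k)) = (\<lambda>j. j + Suc k)" by auto
    then show ?thesis using Suc.IH[of j] Suc by (simp add: upp_def renP_renP)
  qed
qed

lemma ssubst_Nil: "ssubst [] P = P" by (simp add: ssubst_def psubst_PVar')

lemma K2: "typing (G @ [T]) P Pr \<Longrightarrow> typing [] A T \<Longrightarrow> typing G (psubst (uppn (length G) (inst A)) P) Pr"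
proof (erule typing_psubst, intro allI impI)
  fix i assume A: "typing [] A T" and i: "i < length (G @ [T])"
  show "typing G (uppn (length G) (inst A) i) ((G @ [T]) ! i)"
  proof (cases "i < length G")
    case True then show ?thesis by (simp add: uppn_formula nth_append t_var)
  next
    case False
    then have "i = length G" using i by simp
    then show ?thesis using typing_renP[OF A, of "\<lambda>j. j + length G" G] by (simp add: uppn_formula inst_def)
  qed
qed

lemma K3: "typing (G @ [T]) P Pr \<Longrightarrow> length Rs = length G \<Longrightarrow> typing [] A T \<Longrightarrow>
  ssubst (Rs @ [A]) P = ssubst Rs (psubst (uppn (length G) (inst A)) P)"
proof -
  assume P: "typing (G @ [T]) P Pr" and l: "length Rs = length G" and A: "typing [] A T"
  let ?s = "\<lambda>i. if i < length Rs then Rs ! i else PVar (i - length Rs)"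
  have "ssubst Rs (psubst (uppn (length G) (inst A)) P) = psubst (\<lambda>i. psubst ?s (uppn (length G) (inst A) i)) P"
    by (simp add: ssubst_def psubst_psubst)
  also have "\<dots> = psubst (\<lambda>i. if i < length (Rs @ [A]) then (Rs @ [A]) ! i else PVar (i - length (Rs @ [A]))) P"
  proof (rule psubst_agree[OF P], intro allI impI)
    fix i assume i: "i < length (G @ [T])"
    show "psubst ?s (uppn (length G) (inst A) i) = (if i < length (Rs @ [A]) then (Rs @ [A]) ! i else PVar (i - length (Rs @ [A])))"
    proof (cases "i < length G")
      case True then show ?thesis using l by (simp add: uppn_formula nth_append)
    next
      case False
      then have "i = length G" using i by simp
      then show ?thesis using l psubst_closed[OF A] by (simp add: uppn_formula inst_def psubst_renP comp_def nth_append)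
    qed
  qed
  finally show ?thesis by (simp add: ssubst_def)
qed

lemma main_lemma:
  "typing G P Pr \<Longrightarrow> typing G Q Pr \<Longrightarrow>
   (\<forall>Rs. length Rs = length G \<and> (\<forall>i < length G. typing [] (Rs ! i) (G ! i)) \<longrightarrow>
             ho_sim (ssubst Rs P) (ssubst Rs Q))
         \<longleftrightarrow> ho_sim (hpref h G P) (hpref h G Q)"
proof (induction G arbitrary: P Q rule: rev_induct)
  case Nil then show ?case by (simp add: ssubst_Nil)
next
  case (snoc T G)
  let ?n = "length G"
  define PA where "PA A = psubst (uppn ?n (inst A)) P" for A
  define QA where "QA A = psubst (uppn ?n (inst A)) Q" for A
  have tPA: "typing G (PA A) Pr" if "typing [] A T" for A using K2[OF snoc.prems(1) that] PA_def by simp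
  have tQA: "typing G (QA A) Pr" if "typing [] A T" for A using K2[OF snoc.prems(2) that] QA_def by simp
  have tP: "typing [T] (hpref h G P) Pr" using typing_hpref[OF snoc.prems(1)] .
  have tQ: "typing [T] (hpref h G Q) Pr" using typing_hpref[OF snoc.prems(2)] .
  have "(\<forall>Rs. length Rs = length (G @ [T]) \<and> (\<forall>i < length (G @ [T]). typing [] (Rs ! i) ((G @ [T]) ! i)) \<longrightarrow>
             ho_sim (ssubst Rs P) (ssubst Rs Q))
     \<longleftrightarrow> (\<forall>A. typing [] A T \<longrightarrow> (\<forall>Rs. length Rs = length G \<and> (\<forall>i < length G. typing [] (Rs ! i) (G ! i)) \<longrightarrow>
             ho_sim (ssubst Rs (PA A)) (ssubst Rs (QA A))))" (is "?L \<longleftrightarrow> ?M")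
  proof
    assume L: ?L
    show ?M
    proof (intro allI impI)
      fix A Rs assume A: "typing [] A T" and Rs: "length Rs = length G \<and> (\<forall>i < length G. typing [] (Rs ! i) (G ! i))"
      have "length (Rs @ [A]) = length (G @ [T]) \<and> (\<forall>i < length (G @ [T]). typing [] ((Rs @ [A]) ! i) ((G @ [T]) ! i))"
        using Rs A by (auto simp: nth_append less_Suc_eq)
      with L have "ho_sim (ssubst (Rs @ [A]) P) (ssubst (Rs @ [A]) Q)" by blast
      then show "ho_sim (ssubst Rs (PA A)) (ssubst Rs (QA A))"
        using K3[OF snoc.prems(1) _ A, of Rs] K3[OF snoc.prems(2) _ A, of Rs] Rs PA_def QA_def by simp
    qed
  next
    assume M: ?M
    show ?L
    proof (intro allI impI)
      fix Rs' assume Rs': "length Rs' = length (G @ [T]) \<and> (\<forall>i < length (G @ [T]). typing [] (Rs' ! i) ((G @ [T]) ! i))"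
      define Rs where "Rs = butlast Rs'"
      define A where "A = last Rs'"
      have ne: "Rs' \<noteq> []" using Rs' by auto
      have e: "Rs' = Rs @ [A]" using ne by (simp add: Rs_def A_def)
      have lR: "length Rs = length G" using Rs' by (simp add: Rs_def)
      have A: "typing [] A T" using Rs'[THEN conjunct2, rule_format, of ?n] e lR by (simp add: nth_append)
      have tR: "\<forall>i < length G. typing [] (Rs ! i) (G ! i)"
      proof (intro allI impI)
        fix i assume "i < length G"
        then show "typing [] (Rs ! i) (G ! i)" using Rs'[THEN conjunct2, rule_format, of i] e lR by (simp add: nth_append)
      qed
      have "ho_sim (ssubst Rs (PA A)) (ssubst Rs (QA A))" using M A lR tR by blast
      then show "ho_sim (ssubst Rs' P) (ssubst Rs' Q)"
        using K3[OF snoc.prems(1) lR A] K3[OF snoc.prems(2) lR A] e PA_def QA_def by simp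
    qed
  qed
  also have "?M \<longleftrightarrow> (\<forall>A. typing [] A T \<longrightarrow> ho_sim (hpref h G (PA A)) (hpref h G (QA A)))"
    using snoc.IH tPA tQA by blast
  also have "\<dots> \<longleftrightarrow> (\<forall>A. typing [] A T \<longrightarrow> ho_sim (psubst (inst A) (hpref h G P)) (psubst (inst A) (hpref h G Q)))"
    by (simp add: psubst_hpref PA_def QA_def)
  also have "\<dots> \<longleftrightarrow> ho_sim (hpref h (G @ [T]) P) (hpref h (G @ [T]) Q)"
    unfolding hpref_snoc using prefix_intro[OF tP tQ] prefix_elim[OF _ tP tQ] by blast
  finally show ?case .
qed

theorem mainTheorem8:
  fixes P Q :: trm and G :: "ty list" and h :: nat
  assumes "typing G P Pr" and "typing G Q Pr"
    and "NC h \<notin> names P" and "NC h \<notin> names Q"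
  shows "(\<forall>Rs. length Rs = length G \<and> (\<forall>i < length G. typing [] (Rs ! i) (G ! i)) \<longrightarrow>
             ho_sim (ssubst Rs P) (ssubst Rs Q))
         \<longleftrightarrow> ho_sim (hpref h G P) (hpref h G Q)"
  using main_lemma[OF assms(1) assms(2)] .

end
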